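(* Let $\mathcal{L}_\to\subseteq\{\land,\lor,\to,\lnot,0,1\}$ be a language containing $\to$ and $\Phi$ a Sahlqvist quasiequation in $\mathcal{L}_\to$. For every $\mathcal{L}_\to$-subreduct $\boldsymbol{A}$ of a Heyting algebra: $\boldsymbol{A}\vDash\mathsf{A}(\Phi)$ if and only if $\boldsymbol{B}_\ast\vDash\mathsf{tr}(\Phi)$ for every $\boldsymbol{B}\in\mathbb{V}(\boldsymbol{A})$.
   Context: An $\mathcal{L}_\to$-subreduct of a Heyting algebra is a subalgebra of its $\mathcal{L}_\to$-reduct; $\mathbb{V}(\boldsymbol{A})$ is the variety generated by $\boldsymbol{A}$. In such an algebra $x\to x$ is constant with value $1$; a formula $\varphi$ is valid in $\boldsymbol{A}$ if $\boldsymbol{A}\vDash\varphi\approx1$, and $\boldsymbol{A}\vDash S$ for a set $S$ of formulas means every member is valid. An implicative filter of $\boldsymbol{A}$ is $F\subseteq A$ with $1\in F$ and $a,a\to b\in F\Rightarrow b\in F$; $\boldsymbol{A}_\ast$ is the poset under inclusion of meet irreducible implicative filters (proper, and not the intersection of two implicative filters both different from it). Sahlqvist quasiequations: formulas over variables with $\land,\lor,\to,\lnot,0,1$; a variable occurrence is positive (negative) if the number of negations and implication antecedents in whose scope it lies is even (odd); positive/negative formulas have all occurrences so. Sahlqvist antecedent: built from variables, negative formulas, $0,1$ by $\land,\lor$. Sahlqvist implication: positive formula, or $\lnot\varphi$ with $\varphi$ a Sahlqvist antecedent, or $\varphi\to\psi$ with $\varphi$ a Sahlqvist antecedent and $\psi$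 positive. $\Phi=\varphi_1\land y\le z\,\&\cdots\&\,\varphi_m\land y\le z\Longrightarrow y\le z$, $y,z$ distinct variables not occurring in the $\varphi_i$, each $\varphi_i$ built from Sahlqvist implications by $\land,\lor$; $a\le b$ means $a\land b\approx a$; $\Phi$ is in $\mathcal{L}_\to$ if the $\varphi_i$ only use symbols from $\mathcal{L}_\to$. For each such formula $\varphi(x_1..x_n)$ and $k\ge1$, $\boldsymbol{\varphi}^k$ is the finite set of $\mathsf{IPC}$ formulas defined by: $\boldsymbol{x_m}^k=\{x_m^1..x_m^k\}$; $\boldsymbol{1}^k=\{\top(x_1^1)\}$ with $\top(x)=x\to x$; $\boldsymbol{0}^k=\{x_1^1, x_1^1\to0\}$; $(\boldsymbol{\psi\land\chi})^k=\boldsymbol{\psi}^k\cup\boldsymbol{\chi}^k$; with $\boldsymbol{\psi}^k=\{\psi_1..\psi_p\}$, $\boldsymbol{\chi}^k=\{\chi_1..\chi_t\}$: $(\boldsymbol{\lnot\psi})^k=\{\psi_1\to(\psi_2\to(\cdots(\psi_p\to0)\cdots))\}$, $(\boldsymbol{\psi\to\chi})^k=\{\psi_1\to(\cdots(\psi_p\to\chi_j)\cdots):j\le t\}$, $(\boldsymbol{\psi\lor\chi})^k=\{\psi_i\lor\chi_j:i\le p,j\le t\}$. For a finite set $\Gamma=\{\gamma_1..\gamma_n\}$ and formula $\varphi$, $\Gamma\to\varphi$ denotes $\{\gamma_1\to(\gamma_2\to(\cdots(\gamma_n\to\varphi)\cdots))\}$ (and for a union of such singletons $\Sigma$, $\Sigma\to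 y$ is defined likewise). Then $\mathsf{A}(\Phi)=\bigcup_{k\ge1}\big(((\boldsymbol{\varphi_1}^k\to y)\cup\cdots\cup(\boldsymbol{\varphi_m}^k\to y))\to y\big)$, with $y$ a variable not occurring in the $\boldsymbol{\varphi_i}^k$. $\mathsf{Up}(\mathbb{X})$ is the Heyting algebra of upsets of a poset ($\cap,\cup$, $U\to V=X\smallsetminus{\downarrow}(U\smallsetminus V)$, $\emptyset$, $X$), and $\mathsf{tr}(\Phi)$ is the effectively computable first-order sentence in the language of posets such that for every poset $\mathbb{X}$, $\mathsf{Up}(\mathbb{X})\vDash\Phi$ iff $\mathbb{X}\vDash\mathsf{tr}(\Phi)$. *)

theory Defs
  imports Main
begin

datatype opsym = Meet | Join | Imp | Neg | Zero | One

datatype 'v fm = Var 'v | Top | Bot | And "'v fm" "'v fm" | Or "'v fm" "'v fm"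
  | Impl "'v fm" "'v fm" | Not "'v fm"

fun syms :: "'v fm \<Rightarrow> opsym set" where
  "syms (Var x) = {}"
| "syms Top = {One}"
| "syms Bot = {Zero}"
| "syms (And a b) = insert Meet (syms a \<union> syms b)"
| "syms (Or a b) = insert Join (syms a \<union> syms b)"
| "syms (Impl a b) = insert Imp (syms a \<union> syms b)"
| "syms (Not a) = insert Neg (syms a)"

record 'a alg =
  car :: "'a set"
  mt :: "'a \<Rightarrow> 'a \<Rightarrow> 'a"
  jn :: "'a \<Rightarrow> 'a \<Rightarrow> 'a"
  im :: "'a \<Rightarrow> 'a \<Rightarrow> 'a"
  ng :: "'a \<Rightarrow> 'a"
  zr :: "'a"
  tp :: "'a"

fun eval :: "('a, 'c) alg_scheme \<Rightarrow> ('v \<Rightarrow> 'a) \<Rightarrow> 'v fm \<Rightarrow> 'a" where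
  "eval A v (Var x) = v x"
| "eval A v Top = tp A"
| "eval A v Bot = zr A"
| "eval A v (And a b) = mt A (eval A v a) (eval A v b)"
| "eval A v (Or a b) = jn A (eval A v a) (eval A v b)"
| "eval A v (Impl a b) = im A (eval A v a) (eval A v b)"
| "eval A v (Not a) = ng A (eval A v a)"

definition hle :: "'a alg \<Rightarrow> 'a \<Rightarrow> 'a \<Rightarrow> bool" where
  "hle H a b \<longleftrightarrow> mt H a b = a"

definition heyting :: "'a alg \<Rightarrow> bool" where
  "heyting H \<longleftrightarrow>
     zr H \<in> car H \<and> tp H \<in> car H \<and>
     (\<forall>a\<in>car H. \<forall>b\<in>car H. mt H a b \<in> car H \<and> jn H a b \<in> car H \<and> im H a b \<in> car H) \<and>
     (\<forall>a\<in>car H. ng H a \<in> car H) \<and>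
     (\<forall>a\<in>car H. \<forall>b\<in>car H. mt H a b = mt H b a \<and> jn H a b = jn H b a \<and>
        mt H a (jn H a b) = a \<and> jn H a (mt H a b) = a) \<and>
     (\<forall>a\<in>car H. \<forall>b\<in>car H. \<forall>c\<in>car H.
        mt H a (mt H b c) = mt H (mt H a b) c \<and> jn H a (jn H b c) = jn H (jn H a b) c) \<and>
     (\<forall>a\<in>car H. jn H a (zr H) = a \<and> mt H a (tp H) = a) \<and>
     (\<forall>a\<in>car H. \<forall>b\<in>car H. \<forall>c\<in>car H. hle H (mt H c a) b \<longleftrightarrow> hle H c (im H a b)) \<and>
     (\<forall>a\<in>car H. ng H a = im H a (zr H))"

definition closed_under :: "opsym set \<Rightarrow> 'a alg \<Rightarrow> 'a set \<Rightarrow> bool" where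
  "closed_under L A S \<longleftrightarrow>
     (Meet \<in> L \<longrightarrow> (\<forall>a\<in>S. \<forall>b\<in>S. mt A a b \<in> S)) \<and>
     (Join \<in> L \<longrightarrow> (\<forall>a\<in>S. \<forall>b\<in>S. jn A a b \<in> S)) \<and>
     (Imp \<in> L \<longrightarrow> (\<forall>a\<in>S. \<forall>b\<in>S. im A a b \<in> S)) \<and>
     (Neg \<in> L \<longrightarrow> (\<forall>a\<in>S. ng A a \<in> S)) \<and>
     (Zero \<in> L \<longrightarrow> zr A \<in> S) \<and>
     (One \<in> L \<longrightarrow> tp A \<in> S)"

text \<open>The \<open>L\<close>-subreduct of the Heyting algebra \<open>H\<close> with universe \<open>S\<close>; its operations
  are those of \<open>H\<close> restricted to \<open>S\<close>.\<close>
definition subreduct :: "opsym set \<Rightarrow> 'a alg \<Rightarrow> 'a set \<Rightarrow> bool" where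
  "subreduct L H S \<longleftrightarrow> heyting H \<and> S \<subseteq> car H \<and> closed_under L H S"

definition valid_in :: "'a alg \<Rightarrow> 'a set \<Rightarrow> 'v fm \<Rightarrow> bool" where
  "valid_in H S \<phi> \<longleftrightarrow> (\<forall>v. (\<forall>x. v x \<in> S) \<longrightarrow> eval H v \<phi> = tp H)"

text \<open>Variety generated by the subreduct \<open>(H,S)\<close> (as an \<open>L\<close>-algebra): the class of
  \<open>L\<close>-algebras satisfying every \<open>L\<close>-equation valid in it.\<close>
definition variety :: "opsym set \<Rightarrow> 'a alg \<Rightarrow> 'a set \<Rightarrow> 'b alg set" where
  "variety L H S = {B. closed_under L B (car B) \<and>
     (\<forall>s t :: nat fm. syms s \<subseteq> L \<longrightarrow> syms t \<subseteq> L \<longrightarrow>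
        (\<forall>v. (\<forall>x. v x \<in> S) \<longrightarrow> eval H v s = eval H v t) \<longrightarrow>
        (\<forall>w. (\<forall>x. w x \<in> car B) \<longrightarrow> eval B w s = eval B w t))}"

definition impl_filter :: "'b alg \<Rightarrow> 'b set \<Rightarrow> bool" where
  "impl_filter B F \<longleftrightarrow> F \<subseteq> car B \<and> (\<forall>a\<in>car B. im B a a \<in> F) \<and>
     (\<forall>a b. a \<in> F \<longrightarrow> im B a b \<in> F \<longrightarrow> b \<in> car B \<longrightarrow> b \<in> F)"

definition meet_irreducible :: "'b alg \<Rightarrow> 'b set \<Rightarrow> bool" where
  "meet_irreducible B F \<longleftrightarrow> impl_filter B F \<and> F \<noteq> car B \<and>
     \<not> (\<exists>G1 G2. impl_filter B G1 \<and> impl_filter B G2 \<and> G1 \<noteq> F \<and> G2 \<noteq> F \<and> F = G1 \<inter> G2)"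

text \<open>\<open>B\<^sub>*\<close>, ordered by inclusion.\<close>
definition Bstar :: "'b alg \<Rightarrow> 'b set set" where
  "Bstar B = {F. meet_irreducible B F}"

definition is_upset :: "'x set \<Rightarrow> ('x \<Rightarrow> 'x \<Rightarrow> bool) \<Rightarrow> 'x set \<Rightarrow> bool" where
  "is_upset X le U \<longleftrightarrow> U \<subseteq> X \<and> (\<forall>x\<in>U. \<forall>y\<in>X. le x y \<longrightarrow> y \<in> U)"

definition downset :: "'x set \<Rightarrow> ('x \<Rightarrow> 'x \<Rightarrow> bool) \<Rightarrow> 'x set \<Rightarrow> 'x set" where
  "downset X le U = {x\<in>X. \<exists>u\<in>U. le x u}"

definition Up :: "'x set \<Rightarrow> ('x \<Rightarrow> 'x \<Rightarrow> bool) \<Rightarrow> 'x set alg" where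
  "Up X le = \<lparr> car = {U. is_upset X le U}, mt = (\<inter>), jn = (\<union>),
     im = (\<lambda>U V. X - downset X le (U - V)),
     ng = (\<lambda>U. X - downset X le U), zr = {}, tp = X \<rparr>"

fun pos :: "'v fm \<Rightarrow> bool" and neg :: "'v fm \<Rightarrow> bool" where
  "pos (Var x) = True"
| "neg (Var x) = False"
| "pos Top = True"
| "neg Top = True"
| "pos Bot = True"
| "neg Bot = True"
| "pos (And a b) = (pos a \<and> pos b)"
| "neg (And a b) = (neg a \<and> neg b)"
| "pos (Or a b) = (pos a \<and> pos b)"
| "neg (Or a b) = (neg a \<and> neg b)"
| "pos (Impl a b) = (neg a \<and> pos b)"
| "neg (Impl a b) = (pos a \<and> neg b)"
| "pos (Not a) = neg a"
| "neg (Not a) = pos a"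

inductive sahl_ant :: "'v fm \<Rightarrow> bool" where
  "sahl_ant (Var x)"
| "neg \<phi> \<Longrightarrow> sahl_ant \<phi>"
| "sahl_ant Bot"
| "sahl_ant Top"
| "sahl_ant a \<Longrightarrow> sahl_ant b \<Longrightarrow> sahl_ant (And a b)"
| "sahl_ant a \<Longrightarrow> sahl_ant b \<Longrightarrow> sahl_ant (Or a b)"

inductive sahl_imp :: "'v fm \<Rightarrow> bool" where
  "pos \<phi> \<Longrightarrow> sahl_imp \<phi>"
| "sahl_ant \<phi> \<Longrightarrow> sahl_imp (Not \<phi>)"
| "sahl_ant \<phi> \<Longrightarrow> pos \<psi> \<Longrightarrow> sahl_imp (Impl \<phi> \<psi>)"

inductive sahl_comb :: "'v fm \<Rightarrow> bool" where
  "sahl_imp \<phi> \<Longrightarrow> sahl_comb \<phi>"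
| "sahl_comb a \<Longrightarrow> sahl_comb b \<Longrightarrow> sahl_comb (And a b)"
| "sahl_comb a \<Longrightarrow> sahl_comb b \<Longrightarrow> sahl_comb (Or a b)"

text \<open>A Sahlqvist quasiequation
  \<open>\<phi>\<^sub>1 \<and> y \<le> z & \<dots> & \<phi>\<^sub>m \<and> y \<le> z \<Longrightarrow> y \<le> z\<close> in the language \<open>L\<close> is represented by
  the list \<open>[\<phi>\<^sub>1, \<dots>, \<phi>\<^sub>m]\<close>; the variables \<open>y, z\<close> are kept separate from the variables
  (natural numbers) of the \<open>\<phi>\<^sub>i\<close>.\<close>
definition sahlqvist_quasi :: "opsym set \<Rightarrow> nat fm list \<Rightarrow> bool" where
  "sahlqvist_quasi L phis \<longleftrightarrow> phis \<noteq> [] \<and> (\<forall>\<phi>\<in>set phis. sahl_comb \<phi> \<and> syms \<phi> \<subseteq> L)"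

definition Up_sat :: "'x set \<Rightarrow> ('x \<Rightarrow> 'x \<Rightarrow> bool) \<Rightarrow> nat fm list \<Rightarrow> bool" where
  "Up_sat X le phis \<longleftrightarrow>
     (\<forall>v Y Z. (\<forall>n. is_upset X le (v n)) \<longrightarrow> is_upset X le Y \<longrightarrow> is_upset X le Z \<longrightarrow>
        (\<forall>\<phi>\<in>set phis. eval (Up X le) v \<phi> \<inter> Y \<subseteq> Z) \<longrightarrow> Y \<subseteq> Z)"

fun imps :: "'v fm list \<Rightarrow> 'v fm \<Rightarrow> 'v fm" where
  "imps [] c = c"
| "imps (a # as) c = Impl a (imps as c)"

text \<open>\<open>bold k \<phi>\<close> is \<open>\<phi>\<^sup>k\<close>: variable \<open>x\<^sub>m\<^sup>j\<close> is \<open>Some (m, j)\<close>; \<open>None\<close> is reserved for \<open>y\<close>.\<close>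
fun bold :: "nat \<Rightarrow> nat fm \<Rightarrow> (nat \<times> nat) option fm list" where
  "bold k (Var m) = map (\<lambda>j. Var (Some (m, j))) [1..<Suc k]"
| "bold k Top = [Impl (Var (Some (1,1))) (Var (Some (1,1)))]"
| "bold k Bot = [Var (Some (1,1)), Impl (Var (Some (1,1))) Bot]"
| "bold k (And a b) = bold k a @ bold k b"
| "bold k (Not a) = [imps (bold k a) Bot]"
| "bold k (Impl a b) = map (\<lambda>c. imps (bold k a) c) (bold k b)"
| "bold k (Or a b) = concat (map (\<lambda>p. map (\<lambda>c. Or p c) (bold k b)) (bold k a))"

definition A_Phi :: "nat fm list \<Rightarrow> (nat \<times> nat) option fm set" where
  "A_Phi phis = {imps (map (\<lambda>\<phi>. imps (bold k \<phi>) (Var None)) phis) (Var None) | k. k \<ge> 1}"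

end

theory Submission
  imports Defs "HOL-Library.Countable"
begin

context
  fixes H :: "'a alg"
  assumes hH: "heyting H"
begin

lemma hc: "zr H \<in> car H" "tp H \<in> car H"
  "a \<in> car H \<Longrightarrow> b \<in> car H \<Longrightarrow> mt H a b \<in> car H"
  "a \<in> car H \<Longrightarrow> b \<in> car H \<Longrightarrow> jn H a b \<in> car H"
  "a \<in> car H \<Longrightarrow> b \<in> car H \<Longrightarrow> im H a b \<in> car H"
  "a \<in> car H \<Longrightarrow> ng H a \<in> car H"
  using hH unfolding heyting_def by auto

lemma hA5: "\<forall>a\<in>car H. \<forall>b\<in>car H. mt H a b = mt H b a \<and> jn H a b = jn H b a \<and>
        mt H a (jn H a b) = a \<and> jn H a (mt H a b) = a"
  using hH unfolding heyting_def by (elim conjE) assumption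
lemma hA6: "\<forall>a\<in>car H. \<forall>b\<in>car H. \<forall>c\<in>car H.
        mt H a (mt H b c) = mt H (mt H a b) c \<and> jn H a (jn H b c) = jn H (jn H a b) c"
  using hH unfolding heyting_def by (elim conjE) assumption
lemma hA7: "\<forall>a\<in>car H. jn H a (zr H) = a \<and> mt H a (tp H) = a"
  using hH unfolding heyting_def by (elim conjE) assumption
lemma hA8: "\<forall>a\<in>car H. \<forall>b\<in>car H. \<forall>c\<in>car H. hle H (mt H c a) b \<longleftrightarrow> hle H c (im H a b)"
  using hH unfolding heyting_def by (elim conjE) assumption
lemma hA9: "\<forall>a\<in>car H. ng H a = im H a (zr H)"
  using hH unfolding heyting_def by (elim conjE) assumption

lemma hcomm: "a \<in> car H \<Longrightarrow> b \<in> car H \<Longrightarrow> mt H a b = mt H b a"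
  "a \<in> car H \<Longrightarrow> b \<in> car H \<Longrightarrow> jn H a b = jn H b a"
  using hA5 by simp_all

lemma habs: "a \<in> car H \<Longrightarrow> b \<in> car H \<Longrightarrow> mt H a (jn H a b) = a"
  "a \<in> car H \<Longrightarrow> b \<in> car H \<Longrightarrow> jn H a (mt H a b) = a"
  using hA5 by simp_all

lemma hassoc: "a \<in> car H \<Longrightarrow> b \<in> car H \<Longrightarrow> c \<in> car H \<Longrightarrow> mt H a (mt H b c) = mt H (mt H a b) c"
  "a \<in> car H \<Longrightarrow> b \<in> car H \<Longrightarrow> c \<in> car H \<Longrightarrow> jn H a (jn H b c) = jn H (jn H a b) c"
  using hA6 by simp_all

lemma hbnd: "a \<in> car H \<Longrightarrow> jn H a (zr H) = a" "a \<in> car H \<Longrightarrow> mt H a (tp H) = a"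
  using hA7 by simp_all

lemma hres: "a \<in> car H \<Longrightarrow> b \<in> car H \<Longrightarrow> c \<in> car H \<Longrightarrow> hle H (mt H c a) b \<longleftrightarrow> hle H c (im H a b)"
  using hA8 by blast

lemma hneg: "a \<in> car H \<Longrightarrow> ng H a = im H a (zr H)"
  using hA9 by simp

lemma hidem: "a \<in> car H \<Longrightarrow> mt H a a = a"
proof -
  assume a: "a \<in> car H"
  have c: "mt H a a \<in> car H" using hc(3)[OF a a] .
  have "jn H a (mt H a a) = a" using habs(2)[OF a a] .
  then have "mt H a a = mt H a (jn H a (mt H a a))" by simp
  also have "\<dots> = a" using habs(1)[OF a c] .
  finally show ?thesis .
qed

lemma hle_refl: "a \<in> car H \<Longrightarrow> hle H a a"
  by (simp add: hle_def hidem)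

lemma hle_antisym: "a \<in> car H \<Longrightarrow> b \<in> car H \<Longrightarrow> hle H a b \<Longrightarrow> hle H b a \<Longrightarrow> a = b"
  unfolding hle_def proof -
  assume a: "a \<in> car H" "b \<in> car H" "mt H a b = a" "mt H b a = b"
  show "a = b" using a(3,4) hcomm(1)[OF a(1,2)] by simp
qed

lemma hle_trans: "a \<in> car H \<Longrightarrow> b \<in> car H \<Longrightarrow> c \<in> car H \<Longrightarrow> hle H a b \<Longrightarrow> hle H b c \<Longrightarrow> hle H a c"
  unfolding hle_def proof -
  assume a: "a \<in> car H" "b \<in> car H" "c \<in> car H" "mt H a b = a" "mt H b c = b"
  have "mt H a c = mt H (mt H a b) c" using a by simp
  also have "\<dots> = mt H a (mt H b c)" using hassoc(1)[OF a(1-3)] by simp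
  also have "\<dots> = a" using a by simp
  finally show "mt H a c = a" .
qed

lemma hmt_le1: "a \<in> car H \<Longrightarrow> b \<in> car H \<Longrightarrow> hle H (mt H a b) a"
  unfolding hle_def proof -
  assume a: "a \<in> car H" "b \<in> car H"
  have "mt H (mt H a b) a = mt H a (mt H a b)" using hcomm(1)[OF hc(3)[OF a] a(1)] .
  also have "\<dots> = mt H (mt H a a) b" using hassoc(1)[OF a(1) a(1) a(2)] .
  also have "\<dots> = mt H a b" using hidem a by simp
  finally show "mt H (mt H a b) a = mt H a b" .
qed

lemma hmt_le2: "a \<in> car H \<Longrightarrow> b \<in> car H \<Longrightarrow> hle H (mt H a b) b"
  proof -
  assume a: "a \<in> car H" "b \<in> car H"
  show ?thesis using hmt_le1[OF a(2,1)] hcomm(1)[OF a] by simp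
qed

lemma hmt_glb: "a \<in> car H \<Longrightarrow> b \<in> car H \<Longrightarrow> c \<in> car H \<Longrightarrow> hle H c a \<Longrightarrow> hle H c b \<Longrightarrow> hle H c (mt H a b)"
  unfolding hle_def using hassoc(1)[of c a b] by simp

lemma hjn_ub1: "a \<in> car H \<Longrightarrow> b \<in> car H \<Longrightarrow> hle H a (jn H a b)"
  unfolding hle_def by (simp add: habs)

lemma hjn_ub2: "a \<in> car H \<Longrightarrow> b \<in> car H \<Longrightarrow> hle H b (jn H a b)"
  proof -
  assume a: "a \<in> car H" "b \<in> car H"
  show ?thesis using hjn_ub1[OF a(2,1)] hcomm(2)[OF a] by simp
qed

lemma hle_jn: assumes a: "a \<in> car H" "b \<in> car H" shows "hle H a b \<longleftrightarrow> jn H a b = b"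
proof
  assume "hle H a b"
  then have m: "mt H a b = a" unfolding hle_def .
  have "jn H a b = jn H b a" using hcomm(2)[OF a(1,2)] .
  also have "\<dots> = jn H b (mt H b a)" using m hcomm(1)[OF a(1,2)] by simp
  also have "\<dots> = b" using habs(2) a by simp
  finally show "jn H a b = b" .
next
  assume j: "jn H a b = b"
  show "hle H a b" unfolding hle_def using habs(1)[OF a(1,2)] j by simp
qed

lemma hjn_lub: assumes a: "a \<in> car H" "b \<in> car H" "c \<in> car H" "hle H a c" "hle H b c"
  shows "hle H (jn H a b) c"
proof -
  have 1: "jn H a c = c" using a(4) hle_jn[OF a(1,3)] by simp
  have 2: "jn H b c = c" using a(5) hle_jn[OF a(2,3)] by simp
  have "jn H (jn H a b) c = c" using hassoc(2)[OF a(1-3)] 1 2 by simp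
  then show ?thesis using hle_jn[OF hc(4)[OF a(1,2)] a(3)] by simp
qed

lemma hzero: assumes a: "a \<in> car H" shows "hle H (zr H) a"
proof -
  have "jn H (zr H) a = a" using hcomm(2)[OF hc(1) a] hbnd(1)[OF a] by simp
  then show ?thesis unfolding hle_def using habs(1)[OF hc(1) a] by simp
qed

lemma htop: "a \<in> car H \<Longrightarrow> hle H a (tp H)"
  unfolding hle_def by (simp add: hbnd)

lemma htopmt: "a \<in> car H \<Longrightarrow> mt H (tp H) a = a"
  using hcomm(1)[OF hc(2)] hbnd(2) by simp

lemma hmp: assumes a: "a \<in> car H" "b \<in> car H" shows "hle H (mt H a (im H a b)) b"
proof -
  have c: "im H a b \<in> car H" using hc(5)[OF a] .
  have "hle H (mt H (im H a b) a) b" using hres[OF a c] hle_refl[OF c] by simp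
  then show ?thesis using hcomm(1)[OF a(1) c] by simp
qed

lemma hmt_mono: assumes a: "a \<in> car H" "b \<in> car H" "c \<in> car H" "hle H a b"
  shows "hle H (mt H a c) (mt H b c)"
proof -
  have ac: "mt H a c \<in> car H" using hc(3)[OF a(1,3)] .
  have "hle H (mt H a c) b" using hle_trans[OF ac a(1,2) hmt_le1[OF a(1,3)] a(4)] .
  then show ?thesis using hmt_glb[OF a(2,3) ac] hmt_le2[OF a(1,3)] by simp
qed

lemma him_top: assumes a: "a \<in> car H" "b \<in> car H" shows "im H a b = tp H \<longleftrightarrow> hle H a b"
proof
  assume i: "im H a b = tp H"
  then have "hle H (tp H) (im H a b)" by (simp add: hle_refl hc)
  then have "hle H (mt H (tp H) a) b" using hres[OF a hc(2)] by simp
  then show "hle H a b" using htopmt[OF a(1)] by simp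
next
  assume "hle H a b"
  then have "hle H (mt H (tp H) a) b" using htopmt[OF a(1)] by simp
  then have "hle H (tp H) (im H a b)" using hres[OF a hc(2)] by simp
  then show "im H a b = tp H" using hle_antisym[OF hc(5)[OF a] hc(2)] htop[OF hc(5)[OF a]] by simp
qed

lemma H1: "a \<in> car H \<Longrightarrow> im H a a = tp H"
  by (simp add: him_top hle_refl)

lemma H2: "a \<in> car H \<Longrightarrow> c \<in> car H \<Longrightarrow> im H a (im H c c) = im H c c"
  by (simp add: H1 him_top hc(2) htop)

lemma H3: assumes a: "a \<in> car H" "b \<in> car H" shows "im H a (im H b a) = tp H"
proof -
  have "hle H (mt H a b) a" using hmt_le1[OF a] .
  then have "hle H a (im H b a)" using hres[OF a(2,1,1)] by simp
  then show ?thesis using him_top[OF a(1) hc(5)[OF a(2,1)]] by simp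
qed

lemma H4: assumes a: "a \<in> car H" "b \<in> car H" "c \<in> car H"
  shows "im H (im H a (im H b c)) (im H (im H a b) (im H a c)) = tp H"
proof -
  define p where "p = im H a (im H b c)"
  define q where "q = im H a b"
  have bc: "im H b c \<in> car H" using hc(5)[OF a(2,3)] .
  have cp: "p \<in> car H" "q \<in> car H" unfolding p_def q_def using a hc bc by auto
  have 1: "hle H (mt H a p) (im H b c)" unfolding p_def using hmp[OF a(1) bc] .
  have 2: "hle H (mt H a q) b" unfolding q_def using hmp[OF a(1,2)] .
  define x where "x = mt H (mt H p q) a"
  have pq: "mt H p q \<in> car H" using hc(3)[OF cp] .
  have cx: "x \<in> car H" unfolding x_def using hc(3)[OF pq a(1)] .
  have ap: "mt H a p \<in> car H" using hc(3)[OF a(1) cp(1)] .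
  have aq: "mt H a q \<in> car H" using hc(3)[OF a(1) cp(2)] .
  have x1: "hle H x (mt H a p)"
  proof -
    have "hle H x (mt H p q)" unfolding x_def using hmt_le1[OF pq a(1)] .
    then have "hle H x p" using hle_trans[OF cx pq cp(1)] hmt_le1[OF cp] by simp
    moreover have "hle H x a" unfolding x_def using hmt_le2[OF pq a(1)] .
    ultimately show ?thesis using hmt_glb[OF a(1) cp(1) cx] by simp
  qed
  have x2: "hle H x (mt H a q)"
  proof -
    have "hle H x (mt H p q)" unfolding x_def using hmt_le1[OF pq a(1)] .
    then have "hle H x q" using hle_trans[OF cx pq cp(2)] hmt_le2[OF cp] by simp
    moreover have "hle H x a" unfolding x_def using hmt_le2[OF pq a(1)] .
    ultimately show ?thesis using hmt_glb[OF a(1) cp(2) cx] by simp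
  qed
  have xb: "hle H x b" using hle_trans[OF cx aq a(2) x2 2] .
  have xbc: "hle H x (im H b c)" using hle_trans[OF cx ap bc x1 1] .
  have "hle H x (mt H b (im H b c))" using hmt_glb[OF a(2) bc cx] xb xbc by simp
  then have "hle H x c" using hle_trans[OF cx hc(3)[OF a(2) bc] a(3)] hmp[OF a(2,3)] by simp
  then have "hle H (mt H p q) (im H a c)" unfolding x_def using hres[OF a(1,3) pq] by simp
  then have "hle H p (im H q (im H a c))" using hres[OF cp(2) hc(5)[OF a(1,3)] cp(1)] by simp
  then show ?thesis unfolding p_def[symmetric] q_def[symmetric]
    using him_top[OF cp(1) hc(5)[OF cp(2) hc(5)[OF a(1,3)]]] by simp
qed

lemma H5: assumes a: "a \<in> car H" shows "im H (tp H) a = a"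
proof -
  have c: "im H (tp H) a \<in> car H" using hc(5)[OF hc(2) a] .
  have "hle H (mt H (tp H) (im H (tp H) a)) a" using hmp[OF hc(2) a] .
  then have 1: "hle H (im H (tp H) a) a" using htopmt[OF c] by simp
  have "hle H (mt H a (tp H)) a" using hbnd(2)[OF a] hle_refl[OF a] by simp
  then have 2: "hle H a (im H (tp H) a)" using hres[OF hc(2) a a] by simp
  show ?thesis using hle_antisym[OF c a 1 2] .
qed

lemma H6: assumes a: "a \<in> car H" "b \<in> car H"
  shows "im H (mt H a b) a = tp H" "im H (mt H a b) b = tp H"
    "im H a (im H b (mt H a b)) = tp H"
proof -
  have ab: "mt H a b \<in> car H" using hc(3)[OF a] .
  show "im H (mt H a b) a = tp H" using him_top[OF ab a(1)] hmt_le1[OF a] by simp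
  show "im H (mt H a b) b = tp H" using him_top[OF ab a(2)] hmt_le2[OF a] by simp
  have "hle H (mt H a b) (mt H a b)" using hle_refl[OF ab] .
  then have "hle H a (im H b (mt H a b))" using hres[OF a(2) ab a(1)] by simp
  then show "im H a (im H b (mt H a b)) = tp H" using him_top[OF a(1) hc(5)[OF a(2) ab]] by simp
qed

lemma hdistr: assumes a: "x \<in> car H" "a \<in> car H" "b \<in> car H"
  shows "hle H (mt H x (jn H a b)) (jn H (mt H x a) (mt H x b))"
proof -
  define r where "r = jn H (mt H x a) (mt H x b)"
  have xa: "mt H x a \<in> car H" using hc(3)[OF a(1,2)] .
  have xb: "mt H x b \<in> car H" using hc(3)[OF a(1,3)] .
  have cr: "r \<in> car H" unfolding r_def using hc(4)[OF xa xb] .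
  have "hle H (mt H a x) r" unfolding r_def using hcomm(1)[OF a(1,2)] hjn_ub1[OF xa xb] by simp
  then have 1: "hle H a (im H x r)" using hres[OF a(1) cr a(2)] by simp
  have "hle H (mt H b x) r" unfolding r_def using hcomm(1)[OF a(1,3)] hjn_ub2[OF xa xb] by simp
  then have 2: "hle H b (im H x r)" using hres[OF a(1) cr a(3)] by simp
  have "hle H (jn H a b) (im H x r)" using hjn_lub[OF a(2,3) hc(5)[OF a(1) cr] 1 2] .
  then have "hle H (mt H (jn H a b) x) r" using hres[OF a(1) cr hc(4)[OF a(2,3)]] by simp
  then show ?thesis unfolding r_def[symmetric] using hcomm(1)[OF a(1) hc(4)[OF a(2,3)]] by simp
qed

lemma H7: assumes a: "a \<in> car H" "b \<in> car H"
  shows "im H a (jn H a b) = tp H" "im H b (jn H a b) = tp H"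
  using him_top[OF a(1) hc(4)[OF a]] him_top[OF a(2) hc(4)[OF a]] hjn_ub1[OF a] hjn_ub2[OF a] by simp_all

lemma H7c: assumes a: "a \<in> car H" "b \<in> car H" "c \<in> car H"
  shows "im H (im H a c) (im H (im H b c) (im H (jn H a b) c)) = tp H"
proof -
  define p where "p = im H a c"
  define q where "q = im H b c"
  define x where "x = mt H p q"
  have cp: "p \<in> car H" "q \<in> car H" unfolding p_def q_def using hc(5) a by auto
  have cx: "x \<in> car H" unfolding x_def using hc(3)[OF cp] .
  have xa: "mt H x a \<in> car H" using hc(3)[OF cx a(1)] .
  have xb: "mt H x b \<in> car H" using hc(3)[OF cx a(2)] .
  have "hle H (mt H x a) (mt H p a)" unfolding x_def using hmt_mono[OF hc(3)[OF cp] cp(1) a(1) hmt_le1[OF cp]] .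
  moreover have "hle H (mt H p a) c" unfolding p_def using hmp[OF a(1,3)] hcomm(1)[OF a(1) hc(5)[OF a(1,3)]] by simp
  ultimately have 1: "hle H (mt H x a) c" using hle_trans[OF xa hc(3)[OF cp(1) a(1)] a(3)] by simp
  have "hle H (mt H x b) (mt H q b)" unfolding x_def using hmt_mono[OF hc(3)[OF cp] cp(2) a(2) hmt_le2[OF cp]] .
  moreover have "hle H (mt H q b) c" unfolding q_def using hmp[OF a(2,3)] hcomm(1)[OF a(2) hc(5)[OF a(2,3)]] by simp
  ultimately have 2: "hle H (mt H x b) c" using hle_trans[OF xb hc(3)[OF cp(2) a(2)] a(3)] by simp
  have "hle H (jn H (mt H x a) (mt H x b)) c" using hjn_lub[OF xa xb a(3) 1 2] .
  then have "hle H (mt H x (jn H a b)) c"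
    using hle_trans[OF hc(3)[OF cx hc(4)[OF a(1,2)]] hc(4)[OF xa xb] a(3) hdistr[OF cx a(1,2)]] by simp
  then have "hle H x (im H (jn H a b) c)" using hres[OF hc(4)[OF a(1,2)] a(3) cx] by simp
  then have "hle H p (im H q (im H (jn H a b) c))" unfolding x_def
    using hres[OF cp(2) hc(5)[OF hc(4)[OF a(1,2)] a(3)] cp(1)] by simp
  then show ?thesis unfolding p_def[symmetric] q_def[symmetric]
    using him_top[OF cp(1) hc(5)[OF cp(2) hc(5)[OF hc(4)[OF a(1,2)] a(3)]]] by simp
qed

lemma H8: assumes a: "a \<in> car H" "b \<in> car H"
  shows "im H a (im H (ng H a) b) = tp H"
proof -
  have n: "ng H a \<in> car H" using hc(6)[OF a(1)] .
  have an: "mt H a (ng H a) \<in> car H" using hc(3)[OF a(1) n] .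
  have "hle H (mt H a (ng H a)) (zr H)" using hmp[OF a(1) hc(1)] hneg[OF a(1)] by simp
  then have "hle H (mt H a (ng H a)) b" using hle_trans[OF an hc(1) a(2)] hzero[OF a(2)] by simp
  then have "hle H a (im H (ng H a) b)" using hres[OF n a(2) a(1)] by simp
  then show ?thesis using him_top[OF a(1) hc(5)[OF n a(2)]] by simp
qed

lemma H8b: assumes a: "a \<in> car H"
  shows "im H (im H a (ng H a)) (ng H a) = tp H"
proof -
  define p where "p = im H a (ng H a)"
  have n: "ng H a \<in> car H" using hc(6)[OF a(1)] .
  have cp: "p \<in> car H" unfolding p_def using hc(5)[OF a n] .
  have pa: "mt H p a \<in> car H" using hc(3)[OF cp a] .
  have an: "mt H a (ng H a) \<in> car H" using hc(3)[OF a(1) n] .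
  have "hle H (mt H p a) (ng H a)" unfolding p_def using hmp[OF a n] hcomm(1)[OF a hc(5)[OF a n]] by simp
  moreover have "hle H (mt H p a) a" using hmt_le2[OF cp a] .
  ultimately have "hle H (mt H p a) (mt H a (ng H a))" using hmt_glb[OF a n pa] by simp
  moreover have "hle H (mt H a (ng H a)) (zr H)" using hmp[OF a(1) hc(1)] hneg[OF a(1)] by simp
  ultimately have "hle H (mt H p a) (zr H)" using hle_trans[OF pa an hc(1)] by simp
  then have "hle H p (ng H a)" using hres[OF a hc(1) cp] hneg[OF a] by simp
  then show ?thesis unfolding p_def[symmetric] using him_top[OF cp n] by simp
qed

lemma H9: "a \<in> car H \<Longrightarrow> im H (zr H) a = tp H"
  by (simp add: him_top hc hzero)

end

lemma eval_closed: "closed_under L A C \<Longrightarrow> syms \<phi> \<subseteq> L \<Longrightarrow> (\<forall>x. v x \<in> C) \<Longrightarrow> eval A v \<phi> \<in> C"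
  by (induction \<phi>) (auto simp: closed_under_def)

lemma eval_closedH: "heyting H \<Longrightarrow> (\<forall>x. v x \<in> car H) \<Longrightarrow> eval H v \<phi> \<in> car H"
  by (induction \<phi>) (auto simp: hc)

definition vv :: "'b \<Rightarrow> 'b \<Rightarrow> 'b \<Rightarrow> nat \<Rightarrow> 'b" where
  "vv a b c n = (if n = 0 then a else if n = 1 then b else c)"

lemma vv_simps[simp]: "vv a b c 0 = a" "vv a b c (Suc 0) = b" "vv a b c (Suc (Suc 0)) = c"
  by (auto simp: vv_def)

lemma vv_in: "a \<in> C \<Longrightarrow> b \<in> C \<Longrightarrow> c \<in> C \<Longrightarrow> \<forall>x. vv a b c x \<in> C"
  by (auto simp: vv_def)

locale sett =
  fixes L :: "opsym set" and H :: "'a alg" and S :: "'a set" and B :: "'b alg"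
  assumes imp: "Imp \<in> L" and sub: "subreduct L H S" and var: "B \<in> variety L H S"
begin

lemma hH: "heyting H" using sub unfolding subreduct_def by blast
lemma SH: "S \<subseteq> car H" using sub unfolding subreduct_def by blast
lemma clB: "closed_under L B (car B)" using var unfolding variety_def by blast

lemma eqB:
  fixes s t :: "nat fm"
  assumes "syms s \<subseteq> L" "syms t \<subseteq> L"
    and "\<And>v. (\<forall>x. v x \<in> car H) \<Longrightarrow> eval H v s = eval H v t"
    and "\<forall>x. w x \<in> car B"
  shows "eval B w s = eval B w t"
proof -
  have "\<forall>v. (\<forall>x. v x \<in> S) \<longrightarrow> eval H v s = eval H v t" using assms(3) SH by blast
  moreover have "\<forall>s t :: nat fm. syms s \<subseteq> L \<longrightarrow> syms t \<subseteq> L \<longrightarrow>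
        (\<forall>v. (\<forall>x. v x \<in> S) \<longrightarrow> eval H v s = eval H v t) \<longrightarrow>
        (\<forall>w. (\<forall>x. w x \<in> car B) \<longrightarrow> eval B w s = eval B w t)"
    using var unfolding variety_def by blast
  ultimately show ?thesis using assms(1,2,4) by blast
qed

lemma imB: "a \<in> car B \<Longrightarrow> b \<in> car B \<Longrightarrow> im B a b \<in> car B"
  using clB imp unfolding closed_under_def by blast
lemma mtB: "Meet \<in> L \<Longrightarrow> a \<in> car B \<Longrightarrow> b \<in> car B \<Longrightarrow> mt B a b \<in> car B"
  using clB unfolding closed_under_def by blast
lemma jnB: "Join \<in> L \<Longrightarrow> a \<in> car B \<Longrightarrow> b \<in> car B \<Longrightarrow> jn B a b \<in> car B"
  using clB unfolding closed_under_def by blast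
lemma ngB: "Neg \<in> L \<Longrightarrow> a \<in> car B \<Longrightarrow> ng B a \<in> car B"
  using clB unfolding closed_under_def by blast
lemma zrB: "Zero \<in> L \<Longrightarrow> zr B \<in> car B"
  using clB unfolding closed_under_def by blast
lemma tpB: "One \<in> L \<Longrightarrow> tp B \<in> car B"
  using clB unfolding closed_under_def by blast

lemmas hcH = hc[OF hH]

lemma B1: assumes "a \<in> car B" "b \<in> car B" shows "im B a a = im B b b"
  using eqB[of "Impl (Var 0) (Var 0)" "Impl (Var (Suc 0)) (Var (Suc 0))" "vv a b b"]
  by (simp add: imp H1[OF hH] vv_in assms)

lemma B2: assumes "a \<in> car B" "c \<in> car B" shows "im B a (im B c c) = im B c c"
  using eqB[of "Impl (Var 0) (Impl (Var (Suc 0)) (Var (Suc 0)))" "Impl (Var (Suc 0)) (Var (Suc 0))" "vv a c c"]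
  by (simp add: imp H2[OF hH] vv_in assms)

lemma B3: assumes "a \<in> car B" "b \<in> car B" shows "im B a (im B b a) = im B a a"
  using eqB[of "Impl (Var 0) (Impl (Var (Suc 0)) (Var 0))" "Impl (Var 0) (Var 0)" "vv a b b"]
  by (simp add: imp H1[OF hH] H3[OF hH] vv_in assms)

lemma B4: assumes "a \<in> car B" "b \<in> car B" "c \<in> car B"
  shows "im B (im B a (im B b c)) (im B (im B a b) (im B a c)) = im B a a"
  using eqB[of "Impl (Impl (Var 0) (Impl (Var (Suc 0)) (Var (Suc (Suc 0))))) (Impl (Impl (Var 0) (Var (Suc 0))) (Impl (Var 0) (Var (Suc (Suc 0)))))"
      "Impl (Var 0) (Var 0)" "vv a b c"]
  by (simp add: imp H1[OF hH] H4[OF hH] vv_in assms)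

lemma B5: assumes "a \<in> car B" "b \<in> car B" shows "im B (im B a a) b = b"
  using eqB[of "Impl (Impl (Var 0) (Var 0)) (Var (Suc 0))" "Var (Suc 0)" "vv a b b"]
  by (simp add: imp H1[OF hH] H5[OF hH] vv_in assms)

lemma B6: assumes "Meet \<in> L" "a \<in> car B" "b \<in> car B"
  shows "im B (mt B a b) a = im B a a" "im B (mt B a b) b = im B a a"
    "im B a (im B b (mt B a b)) = im B a a"
  using eqB[of "Impl (And (Var 0) (Var (Suc 0))) (Var 0)" "Impl (Var 0) (Var 0)" "vv a b b"]
    eqB[of "Impl (And (Var 0) (Var (Suc 0))) (Var (Suc 0))" "Impl (Var 0) (Var 0)" "vv a b b"]
    eqB[of "Impl (Var 0) (Impl (Var (Suc 0)) (And (Var 0) (Var (Suc 0))))" "Impl (Var 0) (Var 0)" "vv a b b"]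
  by (simp_all add: imp H1[OF hH] H6[OF hH] vv_in assms)

lemma B7: assumes "Join \<in> L" "a \<in> car B" "b \<in> car B" "c \<in> car B"
  shows "im B a (jn B a b) = im B a a" "im B b (jn B a b) = im B a a"
    "im B (im B a c) (im B (im B b c) (im B (jn B a b) c)) = im B a a"
  using eqB[of "Impl (Var 0) (Or (Var 0) (Var (Suc 0)))" "Impl (Var 0) (Var 0)" "vv a b c"]
    eqB[of "Impl (Var (Suc 0)) (Or (Var 0) (Var (Suc 0)))" "Impl (Var 0) (Var 0)" "vv a b c"]
    eqB[of "Impl (Impl (Var 0) (Var (Suc (Suc 0)))) (Impl (Impl (Var (Suc 0)) (Var (Suc (Suc 0)))) (Impl (Or (Var 0) (Var (Suc 0))) (Var (Suc (Suc 0)))))"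
      "Impl (Var 0) (Var 0)" "vv a b c"]
  by (simp_all add: imp H1[OF hH] H7[OF hH] H7c[OF hH] hcH vv_in assms)

lemma B8: assumes "Neg \<in> L" "a \<in> car B" "b \<in> car B"
  shows "im B a (im B (ng B a) b) = im B a a" "im B (im B a (ng B a)) (ng B a) = im B a a"
  using eqB[of "Impl (Var 0) (Impl (Not (Var 0)) (Var (Suc 0)))" "Impl (Var 0) (Var 0)" "vv a b b"]
    eqB[of "Impl (Impl (Var 0) (Not (Var 0))) (Not (Var 0))" "Impl (Var 0) (Var 0)" "vv a b b"]
  by (simp_all add: imp H1[OF hH] H8[OF hH] H8b[OF hH] vv_in assms)

lemma B9: assumes "Zero \<in> L" "a \<in> car B"
  shows "im B (zr B) a = im B a a"
  using eqB[of "Impl Bot (Var 0)" "Impl (Var 0) (Var 0)" "vv a a a"]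
  by (simp_all add: imp H1[OF hH] H9[OF hH] vv_in assms)

lemma B10: assumes "One \<in> L" "a \<in> car B"
  shows "tp B = im B a a"
  using eqB[of "Top" "Impl (Var 0) (Var 0)" "vv a a a"]
  by (simp_all add: imp H1[OF hH] vv_in assms)

end

lemma Up_ops[simp]: "mt (Up X le) = (\<inter>)" "jn (Up X le) = (\<union>)"
  "im (Up X le) = (\<lambda>U V. X - downset X le (U - V))" "ng (Up X le) = (\<lambda>U. X - downset X le U)"
  "zr (Up X le) = {}" "tp (Up X le) = X" "car (Up X le) = {U. is_upset X le U}"
  by (simp_all add: Up_def)

lemma ev_simps[simp]:
  "eval (Up X le) v (Var x) = v x"
  "eval (Up X le) v Top = X"
  "eval (Up X le) v Bot = {}"
  "eval (Up X le) v (And a b) = eval (Up X le) v a \<inter> eval (Up X le) v b"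
  "eval (Up X le) v (Or a b) = eval (Up X le) v a \<union> eval (Up X le) v b"
  "eval (Up X le) v (Impl a b) = X - downset X le (eval (Up X le) v a - eval (Up X le) v b)"
  "eval (Up X le) v (Not a) = X - downset X le (eval (Up X le) v a)"
  by (simp_all add: Up_def)

context sett
begin

abbreviation filt where "filt F \<equiv> impl_filter B F"
abbreviation XX where "XX \<equiv> Bstar B"

definition one where "one = im B (SOME a. a \<in> car B) (SOME a. a \<in> car B)"

lemma one_eq: "a \<in> car B \<Longrightarrow> im B a a = one"
proof -
  assume a: "a \<in> car B"
  have "(SOME a. a \<in> car B) \<in> car B" using a by (rule someI)
  then show ?thesis unfolding one_def using B1[OF a] by blast
qed

lemma one_in: "a \<in> car B \<Longrightarrow> one \<in> car B"
proof -
  assume a: "a \<in> car B"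
  show ?thesis using one_eq[OF a] imB[OF a a] by simp
qed

lemma filt_sub: "filt F \<Longrightarrow> F \<subseteq> car B"
  unfolding impl_filter_def by blast
lemma filt_one: "filt F \<Longrightarrow> a \<in> car B \<Longrightarrow> one \<in> F"
  unfolding impl_filter_def using one_eq by auto
lemma filt_mp: "filt F \<Longrightarrow> a \<in> F \<Longrightarrow> im B a b \<in> F \<Longrightarrow> b \<in> car B \<Longrightarrow> b \<in> F"
  unfolding impl_filter_def by blast
lemma filt_one': "filt F \<Longrightarrow> a \<in> car B \<Longrightarrow> im B a a \<in> F"
  unfolding impl_filter_def by blast

lemma X_mi: "P \<in> XX \<Longrightarrow> meet_irreducible B P"
  unfolding Bstar_def by simp
lemma X_filt: assumes "P \<in> XX" shows "filt P"
  using X_mi[OF assms] unfolding meet_irreducible_def by (elim conjE)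
lemma X_sub: "P \<in> XX \<Longrightarrow> P \<subseteq> car B"
  using X_filt filt_sub by blast
lemma X_proper: assumes "P \<in> XX" shows "\<exists>b\<in>car B. b \<notin> P"
proof -
  have "P \<noteq> car B" using X_mi[OF assms] unfolding meet_irreducible_def by (elim conjE)
  then show ?thesis using X_sub[OF assms] by blast
qed
lemma X_irr: assumes "P \<in> XX" "filt G1" "filt G2" "P = G1 \<inter> G2" shows "G1 = P \<or> G2 = P"
proof -
  have "\<not> (\<exists>G1 G2. filt G1 \<and> filt G2 \<and> G1 \<noteq> P \<and> G2 \<noteq> P \<and> P = G1 \<inter> G2)"
    using X_mi[OF assms(1)] unfolding meet_irreducible_def by (elim conjE)
  then show ?thesis using assms(2-4) by blast
qed

definition gen where "gen F a = {c \<in> car B. im B a c \<in> F}"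

lemma gen_filt: assumes F: "filt F" and a: "a \<in> car B" shows "filt (gen F a)"
  unfolding impl_filter_def
proof (intro conjI ballI allI impI)
  show "gen F a \<subseteq> car B" unfolding gen_def by blast
next
  fix c assume c: "c \<in> car B"
  have "im B a (im B c c) \<in> F" using B2[OF a c] filt_one'[OF F c] by simp
  then show "im B c c \<in> gen F a" unfolding gen_def using imB[OF c c] by blast
next
  fix x y assume x: "x \<in> gen F a" and xy: "im B x y \<in> gen F a" and y: "y \<in> car B"
  have xc: "x \<in> car B" and ax: "im B a x \<in> F" using x unfolding gen_def by auto
  have axy: "im B a (im B x y) \<in> F" using xy unfolding gen_def by auto
  have "im B (im B a (im B x y)) (im B (im B a x) (im B a y)) \<in> F"
    using B4[OF a xc y] filt_one'[OF F a] by simp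
  then have "im B (im B a x) (im B a y) \<in> F"
    using filt_mp[OF F axy] imB a xc y by blast
  then have "im B a y \<in> F" using filt_mp[OF F ax] imB a y by blast
  then show "y \<in> gen F a" unfolding gen_def using y by blast
qed

lemma gen_sup: assumes F: "filt F" and a: "a \<in> car B" shows "F \<subseteq> gen F a"
proof
  fix c assume c: "c \<in> F"
  have cc: "c \<in> car B" using c filt_sub[OF F] by blast
  have "im B c (im B a c) \<in> F" using B3[OF cc a] filt_one'[OF F cc] by simp
  then have "im B a c \<in> F" using filt_mp[OF F c] imB a cc by blast
  then show "c \<in> gen F a" unfolding gen_def using cc by blast
qed

lemma gen_a: assumes F: "filt F" and a: "a \<in> car B" shows "a \<in> gen F a"
  unfolding gen_def using filt_one'[OF F a] a by blast

lemma union_chain_filt: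
  assumes Cne: "C \<noteq> {}" and fC: "\<forall>G\<in>C. filt G" and chC: "\<forall>x\<in>C. \<forall>y\<in>C. x \<subseteq> y \<or> y \<subseteq> x"
  shows "filt (\<Union>C)"
  unfolding impl_filter_def
proof (intro conjI)
  show "\<Union>C \<subseteq> car B" using fC filt_sub by blast
  show "\<forall>a\<in>car B. im B a a \<in> \<Union>C"
  proof
    fix a assume a: "a \<in> car B"
    obtain G where G: "G \<in> C" using Cne by blast
    have "im B a a \<in> G" using filt_one'[OF _ a] fC G by blast
    then show "im B a a \<in> \<Union>C" using G by blast
  qed
  show "\<forall>a b. a \<in> \<Union>C \<longrightarrow> im B a b \<in> \<Union>C \<longrightarrow> b \<in> car B \<longrightarrow> b \<in> \<Union>C"
  proof (intro allI impI)
    fix a b assume a: "a \<in> \<Union>C" and ab: "im B a b \<in> \<Union>C" and b: "b \<in> car B"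
    obtain G1 where G1: "G1 \<in> C" "a \<in> G1" using a by blast
    obtain G2 where G2: "G2 \<in> C" "im B a b \<in> G2" using ab by blast
    have f1: "filt G1" and f2: "filt G2" using fC G1 G2 by auto
    show "b \<in> \<Union>C"
    proof (cases "G1 \<subseteq> G2")
      case True
      then have "b \<in> G2" using filt_mp[OF f2 _ G2(2) b] G1(2) by blast
      then show ?thesis using G2 by blast
    next
      case False
      then have "G2 \<subseteq> G1" using chC G1 G2 by blast
      then have "b \<in> G1" using filt_mp[OF f1 G1(2) _ b] G2(2) by blast
      then show ?thesis using G1 by blast
    qed
  qed
qed

lemma zorn_filt:
  assumes Q: "filt Q" and fin: "\<forall>t\<in>T. finite (n t)" and nQ: "\<forall>t\<in>T. \<not> n t \<subseteq> Q"
  shows "\<exists>M. filt M \<and> Q \<subseteq> M \<and> (\<forall>t\<in>T. \<not> n t \<subseteq> M) \<and>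
     (\<forall>G. filt G \<longrightarrow> M \<subseteq> G \<longrightarrow> (\<forall>t\<in>T. \<not> n t \<subseteq> G) \<longrightarrow> G = M)"
proof -
  define A where "A = {G. filt G \<and> Q \<subseteq> G \<and> (\<forall>t\<in>T. \<not> n t \<subseteq> G)}"
  have "\<exists>M\<in>A. \<forall>X\<in>A. M \<subseteq> X \<longrightarrow> X = M"
  proof (rule subset_Zorn_nonempty)
    have "Q \<in> A" unfolding A_def using Q nQ by simp
    then show "A \<noteq> {}" by blast
  next
    fix C assume Cne: "C \<noteq> {}" and ch: "subset.chain A C"
    have CA: "C \<subseteq> A" and chC: "\<forall>x\<in>C. \<forall>y\<in>C. x \<subseteq> y \<or> y \<subseteq> x"
      using ch unfolding subset.chain_def by auto
    have fC: "\<forall>G\<in>C. filt G" using CA unfolding A_def by blast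
    have 1: "filt (\<Union>C)" using union_chain_filt[OF Cne fC chC] .
    have 2: "Q \<subseteq> \<Union>C"
    proof -
      obtain G where G: "G \<in> C" using Cne by blast
      then have "Q \<subseteq> G" using CA unfolding A_def by blast
      then show ?thesis using G by blast
    qed
    have 3: "\<forall>t\<in>T. \<not> n t \<subseteq> \<Union>C"
    proof (intro ballI notI)
      fix t assume t: "t \<in> T" and sub: "n t \<subseteq> \<Union>C"
      have ft: "finite (n t)" using fin t by blast
      obtain G where G: "G \<in> C" "n t \<subseteq> G"
        using finite_subset_Union_chain[OF ft sub Cne ch] by blast
      have "\<not> n t \<subseteq> G" using CA G(1) t unfolding A_def by blast
      then show False using G(2) by blast
    qed
    show "\<Union>C \<in> A" unfolding A_def using 1 2 3 by simp
  qed
  then obtain M where M: "M \<in> A" and mx: "\<forall>X\<in>A. M \<subseteq> X \<longrightarrow> X = M" by blast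
  have "filt M" "Q \<subseteq> M" "\<forall>t\<in>T. \<not> n t \<subseteq> M" using M unfolding A_def by auto
  moreover have "\<forall>G. filt G \<longrightarrow> M \<subseteq> G \<longrightarrow> (\<forall>t\<in>T. \<not> n t \<subseteq> G) \<longrightarrow> G = M"
  proof (intro allI impI)
    fix G assume G: "filt G" "M \<subseteq> G" "\<forall>t\<in>T. \<not> n t \<subseteq> G"
    have "G \<in> A" unfolding A_def using G \<open>Q \<subseteq> M\<close> by auto
    then show "G = M" using mx G(2) by blast
  qed
  ultimately show ?thesis by blast
qed

lemma mk_X:
  assumes M: "filt M" and b: "b \<in> car B" "b \<notin> M"
    and irr: "\<And>G1 G2. filt G1 \<Longrightarrow> filt G2 \<Longrightarrow> G1 \<noteq> M \<Longrightarrow> G2 \<noteq> M \<Longrightarrow> M = G1 \<inter> G2 \<Longrightarrow> False"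
  shows "M \<in> XX"
proof -
  have "M \<noteq> car B" using b by blast
  moreover have "\<not> (\<exists>G1 G2. filt G1 \<and> filt G2 \<and> G1 \<noteq> M \<and> G2 \<noteq> M \<and> M = G1 \<inter> G2)"
    using irr by blast
  ultimately have "meet_irreducible B M" unfolding meet_irreducible_def using M by blast
  then show ?thesis unfolding Bstar_def by simp
qed

lemma Z1: assumes Q: "filt Q" and b: "b \<in> car B" "b \<notin> Q"
  shows "\<exists>P\<in>XX. Q \<subseteq> P \<and> b \<notin> P"
proof -
  have "\<exists>M. filt M \<and> Q \<subseteq> M \<and> (\<forall>t\<in>{()}. \<not> {b} \<subseteq> M) \<and>
     (\<forall>G. filt G \<longrightarrow> M \<subseteq> G \<longrightarrow> (\<forall>t\<in>{()}. \<not> {b} \<subseteq> G) \<longrightarrow> G = M)"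
    using zorn_filt[OF Q, where T="{()}" and n="\<lambda>_. {b}"] b by simp
  then obtain M where M: "filt M" "Q \<subseteq> M" "b \<notin> M"
    and mx: "\<forall>G. filt G \<longrightarrow> M \<subseteq> G \<longrightarrow> b \<notin> G \<longrightarrow> G = M"
    by auto
  have "M \<in> XX"
  proof (rule mk_X[OF M(1) b(1) M(3)])
    fix G1 G2 assume G: "filt G1" "filt G2" "G1 \<noteq> M" "G2 \<noteq> M" "M = G1 \<inter> G2"
    have "b \<in> G1" using mx G by blast
    moreover have "b \<in> G2" using mx G by blast
    ultimately show False using G M by blast
  qed
  then show ?thesis using M by blast
qed

lemma im_in: assumes P: "P \<in> XX" and a: "a \<in> car B" and b: "b \<in> car B"
  shows "im B a b \<in> P \<longleftrightarrow> (\<forall>Q\<in>XX. P \<subseteq> Q \<longrightarrow> a \<in> Q \<longrightarrow> b \<in> Q)"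
proof
  assume ab: "im B a b \<in> P"
  show "\<forall>Q\<in>XX. P \<subseteq> Q \<longrightarrow> a \<in> Q \<longrightarrow> b \<in> Q"
  proof (intro ballI impI)
    fix Q assume Q: "Q \<in> XX" "P \<subseteq> Q" "a \<in> Q"
    have "im B a b \<in> Q" using ab Q(2) by blast
    then show "b \<in> Q" using filt_mp[OF X_filt[OF Q(1)] Q(3) _ b] by blast
  qed
next
  assume R: "\<forall>Q\<in>XX. P \<subseteq> Q \<longrightarrow> a \<in> Q \<longrightarrow> b \<in> Q"
  show "im B a b \<in> P"
  proof (rule ccontr)
    assume "im B a b \<notin> P"
    then have "b \<notin> gen P a" unfolding gen_def by blast
    then obtain Q where Q: "Q \<in> XX" "gen P a \<subseteq> Q" "b \<notin> Q"
      using Z1[OF gen_filt[OF X_filt[OF P] a] b] by blast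
    have "P \<subseteq> Q" using gen_sup[OF X_filt[OF P] a] Q(2) by blast
    moreover have "a \<in> Q" using gen_a[OF X_filt[OF P] a] Q(2) by blast
    ultimately have "b \<in> Q" using R Q(1) by blast
    then show False using Q(3) by blast
  qed
qed

definition impsB where "impsB cs z = foldr (im B) cs z"

lemma impsB_simps[simp]: "impsB [] z = z" "impsB (c # cs) z = im B c (impsB cs z)"
  by (simp_all add: impsB_def)

lemma impsB_car: "set cs \<subseteq> car B \<Longrightarrow> z \<in> car B \<Longrightarrow> impsB cs z \<in> car B"
  by (induction cs) (auto simp: imB)

lemma imps_in: assumes P: "P \<in> XX" and cs: "set cs \<subseteq> car B" and z: "z \<in> car B"
  shows "impsB cs z \<in> P \<longleftrightarrow> (\<forall>Q\<in>XX. P \<subseteq> Q \<longrightarrow> set cs \<subseteq> Q \<longrightarrow> z \<in> Q)"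
  using P cs
proof (induction cs arbitrary: P)
  case Nil
  show ?case using Nil.prems(1) by auto
next
  case (Cons c cs)
  have cc: "c \<in> car B" "set cs \<subseteq> car B" using Cons.prems by auto
  have IH: "\<And>Q. Q \<in> XX \<Longrightarrow> impsB cs z \<in> Q \<longleftrightarrow> (\<forall>R\<in>XX. Q \<subseteq> R \<longrightarrow> set cs \<subseteq> R \<longrightarrow> z \<in> R)"
    using Cons.IH cc(2) by blast
  have E: "impsB (c # cs) z \<in> P \<longleftrightarrow> (\<forall>Q\<in>XX. P \<subseteq> Q \<longrightarrow> c \<in> Q \<longrightarrow> impsB cs z \<in> Q)"
    using im_in[OF Cons.prems(1) cc(1) impsB_car[OF cc(2) z]] by simp
  show ?case
  proof
    assume A: "impsB (c # cs) z \<in> P"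
    show "\<forall>Q\<in>XX. P \<subseteq> Q \<longrightarrow> set (c # cs) \<subseteq> Q \<longrightarrow> z \<in> Q"
    proof (intro ballI impI)
      fix Q assume Q: "Q \<in> XX" "P \<subseteq> Q" "set (c # cs) \<subseteq> Q"
      have "impsB cs z \<in> Q" using A E Q by auto
      then show "z \<in> Q" using IH[OF Q(1)] Q by auto
    qed
  next
    assume A: "\<forall>Q\<in>XX. P \<subseteq> Q \<longrightarrow> set (c # cs) \<subseteq> Q \<longrightarrow> z \<in> Q"
    have "\<forall>Q\<in>XX. P \<subseteq> Q \<longrightarrow> c \<in> Q \<longrightarrow> impsB cs z \<in> Q"
    proof (intro ballI impI)
      fix Q assume Q: "Q \<in> XX" "P \<subseteq> Q" "c \<in> Q"
      have "\<forall>R\<in>XX. Q \<subseteq> R \<longrightarrow> set cs \<subseteq> R \<longrightarrow> z \<in> R"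
      proof (intro ballI impI)
        fix R assume R: "R \<in> XX" "Q \<subseteq> R" "set cs \<subseteq> R"
        have "set (c # cs) \<subseteq> R" using R Q by auto
        moreover have "P \<subseteq> R" using R Q by auto
        ultimately show "z \<in> R" using A R(1) by blast
      qed
      then show "impsB cs z \<in> Q" using IH[OF Q(1)] by blast
    qed
    then show "impsB (c # cs) z \<in> P" using E by blast
  qed
qed

lemma mt_in: assumes M: "Meet \<in> L" and P: "P \<in> XX" and a: "a \<in> car B" and b: "b \<in> car B"
  shows "mt B a b \<in> P \<longleftrightarrow> a \<in> P \<and> b \<in> P"
proof -
  have F: "filt P" using X_filt[OF P] .
  have ab: "mt B a b \<in> car B" using mtB[OF M a b] .
  have one: "im B a a \<in> P" using filt_one'[OF F a] .
  show ?thesis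
  proof
    assume m: "mt B a b \<in> P"
    have "im B (mt B a b) a \<in> P" "im B (mt B a b) b \<in> P"
      using B6(1,2)[OF M a b] one by simp_all
    then show "a \<in> P \<and> b \<in> P" using filt_mp[OF F m] a b by blast
  next
    assume ab2: "a \<in> P \<and> b \<in> P"
    have "im B a (im B b (mt B a b)) \<in> P" using B6(3)[OF M a b] one by simp
    then have "im B b (mt B a b) \<in> P" using filt_mp[OF F _ _ imB[OF b ab]] ab2 by blast
    then show "mt B a b \<in> P" using filt_mp[OF F _ _ ab] ab2 by blast
  qed
qed

lemma irr2: assumes P: "P \<in> XX" and a: "a \<in> car B" "a \<notin> P" and b: "b \<in> car B" "b \<notin> P"
  shows "\<exists>y\<in>car B. y \<notin> P \<and> im B a y \<in> P \<and> im B b y \<in> P"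
proof -
  have F: "filt P" using X_filt[OF P] .
  have "gen P a \<noteq> P" using gen_a[OF F a(1)] a(2) by blast
  moreover have "gen P b \<noteq> P" using gen_a[OF F b(1)] b(2) by blast
  ultimately have "P \<noteq> gen P a \<inter> gen P b"
    using X_irr[OF P gen_filt[OF F a(1)] gen_filt[OF F b(1)]] by blast
  moreover have "P \<subseteq> gen P a \<inter> gen P b" using gen_sup[OF F a(1)] gen_sup[OF F b(1)] by blast
  ultimately obtain y where "y \<in> gen P a" "y \<in> gen P b" "y \<notin> P" by blast
  then show ?thesis unfolding gen_def by blast
qed

lemma jn_in: assumes J: "Join \<in> L" and P: "P \<in> XX" and a: "a \<in> car B" and b: "b \<in> car B"
  shows "jn B a b \<in> P \<longleftrightarrow> a \<in> P \<or> b \<in> P"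
proof -
  have F: "filt P" using X_filt[OF P] .
  have ab: "jn B a b \<in> car B" using jnB[OF J a b] .
  have one: "im B a a \<in> P" using filt_one'[OF F a] .
  show ?thesis
  proof
    assume j: "jn B a b \<in> P"
    show "a \<in> P \<or> b \<in> P"
    proof (rule ccontr)
      assume "\<not> (a \<in> P \<or> b \<in> P)"
      then obtain y where y: "y \<in> car B" "y \<notin> P" "im B a y \<in> P" "im B b y \<in> P"
        using irr2[OF P a _ b] by blast
      have "im B (im B a y) (im B (im B b y) (im B (jn B a b) y)) \<in> P"
        using B7(3)[OF J a b y(1)] one by simp
      then have "im B (im B b y) (im B (jn B a b) y) \<in> P"
        using filt_mp[OF F y(3) _ imB[OF imB[OF b y(1)] imB[OF ab y(1)]]] by blast
      then have "im B (jn B a b) y \<in> P"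
        using filt_mp[OF F y(4) _ imB[OF ab y(1)]] by blast
      then have "y \<in> P" using filt_mp[OF F j _ y(1)] by blast
      then show False using y(2) by blast
    qed
  next
    assume ab2: "a \<in> P \<or> b \<in> P"
    have "im B a (jn B a b) \<in> P" "im B b (jn B a b) \<in> P"
      using B7(1,2)[OF J a b a] one by simp_all
    then show "jn B a b \<in> P" using filt_mp[OF F _ _ ab] ab2 by blast
  qed
qed

lemma ng_in: assumes N: "Neg \<in> L" and P: "P \<in> XX" and a: "a \<in> car B"
  shows "ng B a \<in> P \<longleftrightarrow> (\<forall>Q\<in>XX. P \<subseteq> Q \<longrightarrow> a \<notin> Q)"
proof -
  have F: "filt P" using X_filt[OF P] .
  have na: "ng B a \<in> car B" using ngB[OF N a] .
  show ?thesis
  proof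
    assume n: "ng B a \<in> P"
    show "\<forall>Q\<in>XX. P \<subseteq> Q \<longrightarrow> a \<notin> Q"
    proof (intro ballI impI notI)
      fix Q assume Q: "Q \<in> XX" "P \<subseteq> Q" "a \<in> Q"
      have FQ: "filt Q" using X_filt[OF Q(1)] .
      obtain b where b: "b \<in> car B" "b \<notin> Q" using X_proper[OF Q(1)] by blast
      have "im B a (im B (ng B a) b) \<in> Q"
        using B8(1)[OF N a b(1)] filt_one'[OF FQ a] by simp
      then have "im B (ng B a) b \<in> Q" using filt_mp[OF FQ Q(3) _ imB[OF na b(1)]] by blast
      moreover have "ng B a \<in> Q" using n Q(2) by blast
      ultimately have "b \<in> Q" using filt_mp[OF FQ _ _ b(1)] by blast
      then show False using b(2) by blast
    qed
  next
    assume R: "\<forall>Q\<in>XX. P \<subseteq> Q \<longrightarrow> a \<notin> Q"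
    show "ng B a \<in> P"
    proof (rule ccontr)
      assume nn: "ng B a \<notin> P"
      have "im B (im B a (ng B a)) (ng B a) \<in> P"
        using B8(2)[OF N a a] filt_one'[OF F a] by simp
      then have "im B a (ng B a) \<notin> P" using filt_mp[OF F _ _ na] nn by blast
      then obtain Q where "Q \<in> XX" "P \<subseteq> Q" "a \<in> Q"
        using im_in[OF P a na] by blast
      then show False using R by blast
    qed
  qed
qed

lemma zr_in: assumes Z: "Zero \<in> L" and P: "P \<in> XX" shows "zr B \<notin> P"
proof
  assume z: "zr B \<in> P"
  have F: "filt P" using X_filt[OF P] .
  obtain b where b: "b \<in> car B" "b \<notin> P" using X_proper[OF P] by blast
  have "im B (zr B) b \<in> P" using B9[OF Z b(1)] filt_one'[OF F b(1)] by simp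
  then have "b \<in> P" using filt_mp[OF F z _ b(1)] by blast
  then show False using b(2) by blast
qed

lemma tp_in: assumes O: "One \<in> L" and P: "P \<in> XX" shows "tp B \<in> P"
proof -
  obtain b where b: "b \<in> car B" "b \<notin> P" using X_proper[OF P] by blast
  show ?thesis using B10[OF O b(1)] filt_one'[OF X_filt[OF P] b(1)] by simp
qed

end

lemma downset_sub: "downset X (\<subseteq>) U = {x\<in>X. \<exists>u\<in>U. x \<subseteq> u}"
  by (simp add: downset_def)

lemma mem_imp_set: assumes "A \<subseteq> X"
  shows "x \<in> X - downset X (\<subseteq>) (A - C) \<longleftrightarrow> x \<in> X \<and> (\<forall>Q\<in>X. x \<subseteq> Q \<longrightarrow> Q \<in> A \<longrightarrow> Q \<in> C)"
  using assms unfolding downset_def by blast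

lemma mem_not_set: assumes "A \<subseteq> X"
  shows "x \<in> X - downset X (\<subseteq>) A \<longleftrightarrow> x \<in> X \<and> (\<forall>Q\<in>X. x \<subseteq> Q \<longrightarrow> Q \<notin> A)"
  using assms unfolding downset_def by blast

definition upv :: "'x set set \<Rightarrow> ('v \<Rightarrow> 'x set set) \<Rightarrow> bool" where
  "upv X v \<longleftrightarrow> (\<forall>n. is_upset X (\<subseteq>) (v n))"

lemma ev_up: "upv X v \<Longrightarrow> is_upset X (\<subseteq>) (eval (Up X (\<subseteq>)) v \<phi>)"
proof (induction \<phi>)
  case (Var x)
  then show ?case by (simp add: upv_def)
next
  case Top
  then show ?case by (simp add: is_upset_def)
next
  case Bot
  then show ?case by (simp add: is_upset_def)
next
  case (And a b)
  then show ?case by (simp add: is_upset_def) blast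
next
  case (Or a b)
  then show ?case by (simp add: is_upset_def) blast
next
  case (Impl a b)
  then show ?case by (simp add: is_upset_def downset_def) blast
next
  case (Not a)
  then show ?case by (simp add: is_upset_def downset_def) blast
qed

lemma ev_sub: "upv X v \<Longrightarrow> eval (Up X (\<subseteq>)) v \<phi> \<subseteq> X"
  using ev_up unfolding is_upset_def by blast

lemma mem_Impl: "upv X v \<Longrightarrow> x \<in> eval (Up X (\<subseteq>)) v (Impl a b) \<longleftrightarrow>
   x \<in> X \<and> (\<forall>Q\<in>X. x \<subseteq> Q \<longrightarrow> Q \<in> eval (Up X (\<subseteq>)) v a \<longrightarrow> Q \<in> eval (Up X (\<subseteq>)) v b)"
  using mem_imp_set[OF ev_sub] by simp

lemma mem_Not: "upv X v \<Longrightarrow> x \<in> eval (Up X (\<subseteq>)) v (Not a) \<longleftrightarrow>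
   x \<in> X \<and> (\<forall>Q\<in>X. x \<subseteq> Q \<longrightarrow> Q \<notin> eval (Up X (\<subseteq>)) v a)"
  using mem_not_set[OF ev_sub] by simp

context sett
begin

definition e where "e c = {P \<in> XX. c \<in> P}"
definition UU where "UU C = {P \<in> XX. C \<subseteq> P}"

lemma e_up: "is_upset XX (\<subseteq>) (e c)"
  unfolding is_upset_def e_def by blast
lemma UU_up: "is_upset XX (\<subseteq>) (UU C)"
  unfolding is_upset_def UU_def by blast
lemma upv_e: "upv XX (\<lambda>x. e (w x))"
  unfolding upv_def using e_up by simp

lemma e_mt: assumes M: "Meet \<in> L" and a: "a \<in> car B" and b: "b \<in> car B"
  shows "e (mt B a b) = e a \<inter> e b"
proof (rule set_eqI)
  fix P
  show "P \<in> e (mt B a b) \<longleftrightarrow> P \<in> e a \<inter> e b"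
  proof (cases "P \<in> XX")
    case True
    then show ?thesis unfolding e_def using mt_in[OF M True a b] by simp
  next
    case False
    then show ?thesis unfolding e_def by simp
  qed
qed

lemma e_jn: assumes J: "Join \<in> L" and a: "a \<in> car B" and b: "b \<in> car B"
  shows "e (jn B a b) = e a \<union> e b"
proof (rule set_eqI)
  fix P
  show "P \<in> e (jn B a b) \<longleftrightarrow> P \<in> e a \<union> e b"
  proof (cases "P \<in> XX")
    case True
    then show ?thesis unfolding e_def using jn_in[OF J True a b] by simp
  next
    case False
    then show ?thesis unfolding e_def by simp
  qed
qed

lemma ehom:
  fixes \<chi> :: "'v fm"
  assumes "syms \<chi> \<subseteq> L" and w: "\<forall>x. w x \<in> car B"
  shows "eval B w \<chi> \<in> car B \<and> e (eval B w \<chi>) = eval (Up XX (\<subseteq>)) (\<lambda>x. e (w x)) \<chi>"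
  using assms(1)
proof (induction \<chi>)
  case (Var x)
  then show ?case using w by simp
next
  case Top
  then have O: "One \<in> L" by simp
  show ?case using tpB[OF O] tp_in[OF O] unfolding e_def by auto
next
  case Bot
  then have Z: "Zero \<in> L" by simp
  show ?case using zrB[OF Z] zr_in[OF Z] unfolding e_def by auto
next
  case (And a b)
  then have M: "Meet \<in> L" and IH: "eval B w a \<in> car B \<and> e (eval B w a) = eval (Up XX (\<subseteq>)) (\<lambda>x. e (w x)) a"
    "eval B w b \<in> car B \<and> e (eval B w b) = eval (Up XX (\<subseteq>)) (\<lambda>x. e (w x)) b" by auto
  have "e (mt B (eval B w a) (eval B w b)) = e (eval B w a) \<inter> e (eval B w b)"
    using e_mt[OF M] IH by blast
  then show ?case using IH mtB[OF M] by simp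
next
  case (Or a b)
  then have J: "Join \<in> L" and IH: "eval B w a \<in> car B \<and> e (eval B w a) = eval (Up XX (\<subseteq>)) (\<lambda>x. e (w x)) a"
    "eval B w b \<in> car B \<and> e (eval B w b) = eval (Up XX (\<subseteq>)) (\<lambda>x. e (w x)) b" by auto
  have "e (jn B (eval B w a) (eval B w b)) = e (eval B w a) \<union> e (eval B w b)"
    using e_jn[OF J] IH by blast
  then show ?case using IH jnB[OF J] by simp
next
  case (Impl a b)
  then have IH: "eval B w a \<in> car B \<and> e (eval B w a) = eval (Up XX (\<subseteq>)) (\<lambda>x. e (w x)) a"
    "eval B w b \<in> car B \<and> e (eval B w b) = eval (Up XX (\<subseteq>)) (\<lambda>x. e (w x)) b" by auto
  have c: "im B (eval B w a) (eval B w b) \<in> car B" using imB IH by blast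
  have "e (im B (eval B w a) (eval B w b)) = eval (Up XX (\<subseteq>)) (\<lambda>x. e (w x)) (Impl a b)"
  proof (rule set_eqI)
    fix P
    show "P \<in> e (im B (eval B w a) (eval B w b)) \<longleftrightarrow> P \<in> eval (Up XX (\<subseteq>)) (\<lambda>x. e (w x)) (Impl a b)"
      using mem_Impl[OF upv_e[of w], of P a b] IH im_in[of P "eval B w a" "eval B w b"]
      unfolding e_def by auto
  qed
  then show ?case using c by simp
next
  case (Not a)
  then have N: "Neg \<in> L" and IH: "eval B w a \<in> car B \<and> e (eval B w a) = eval (Up XX (\<subseteq>)) (\<lambda>x. e (w x)) a" by auto
  have c: "ng B (eval B w a) \<in> car B" using ngB[OF N] IH by blast
  have "e (ng B (eval B w a)) = eval (Up XX (\<subseteq>)) (\<lambda>x. e (w x)) (Not a)"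
  proof (rule set_eqI)
    fix P
    show "P \<in> e (ng B (eval B w a)) \<longleftrightarrow> P \<in> eval (Up XX (\<subseteq>)) (\<lambda>x. e (w x)) (Not a)"
      using mem_Not[OF upv_e[of w], of P a] IH ng_in[OF N, of P "eval B w a"]
      unfolding e_def by auto
  qed
  then show ?case using c by simp
qed

lemma irrList:
  assumes P: "P \<in> XX" and fin: "finite C" and C: "C \<subseteq> car B" "C \<inter> P = {}"
  shows "\<exists>y\<in>car B. y \<notin> P \<and> (\<forall>c\<in>C. im B c y \<in> P)"
  using fin C
proof (induction C rule: finite_induct)
  case empty
  then show ?case using X_proper[OF P] by blast
next
  case (insert c C)
  then obtain y' where y': "y' \<in> car B" "y' \<notin> P" "\<forall>c\<in>C. im B c y' \<in> P" by blast
  have c: "c \<in> car B" "c \<notin> P" using insert.prems by auto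
  obtain y where y: "y \<in> car B" "y \<notin> P" "im B c y \<in> P" "im B y' y \<in> P"
    using irr2[OF P c y'(1,2)] by blast
  have "\<forall>c'\<in>C. im B c' y \<in> P"
  proof
    fix c' assume c': "c' \<in> C"
    have cc: "c' \<in> car B" using c' insert.prems by blast
    have 1: "\<forall>Q\<in>XX. P \<subseteq> Q \<longrightarrow> c' \<in> Q \<longrightarrow> y' \<in> Q" using im_in[OF P cc y'(1)] y'(3) c' by blast
    have 2: "\<forall>Q\<in>XX. P \<subseteq> Q \<longrightarrow> y' \<in> Q \<longrightarrow> y \<in> Q" using im_in[OF P y'(1) y(1)] y(4) by blast
    show "im B c' y \<in> P" using im_in[OF P cc y(1)] 1 2 by blast
  qed
  then show ?case using y by blast
qed

lemma dlemma:
  assumes W: "finite W" "W \<subseteq> XX" and Q: "Q \<in> XX" and sub: "car B \<inter> \<Inter>W \<subseteq> Q"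
  shows "\<exists>P\<in>W. P \<subseteq> Q"
proof (rule ccontr)
  assume "\<not> (\<exists>P\<in>W. P \<subseteq> Q)"
  then have "\<forall>P\<in>W. \<exists>a. a \<in> P \<and> a \<notin> Q" by blast
  then obtain f where f: "\<forall>P\<in>W. f P \<in> P \<and> f P \<notin> Q" by metis
  define C where "C = f ` W"
  have finC: "finite C" unfolding C_def using W(1) by simp
  have Cc: "C \<subseteq> car B" unfolding C_def using f W(2) X_sub by blast
  have CQ: "C \<inter> Q = {}" unfolding C_def using f by blast
  obtain y where y: "y \<in> car B" "y \<notin> Q" "\<forall>c\<in>C. im B c y \<in> Q"
    using irrList[OF Q finC Cc CQ] by blast
  obtain cl where cl: "set cl = C" using finite_list[OF finC] by blast
  define cs where "cs = map (\<lambda>c. im B c y) cl"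
  have csc: "set cs \<subseteq> car B" unfolding cs_def using cl Cc imB y(1) by auto
  define d where "d = impsB cs y"
  have dc: "d \<in> car B" unfolding d_def using impsB_car[OF csc y(1)] .
  have "\<forall>P\<in>W. d \<in> P"
  proof
    fix P assume P: "P \<in> W"
    have PX: "P \<in> XX" using P W(2) by blast
    have "\<forall>R\<in>XX. P \<subseteq> R \<longrightarrow> set cs \<subseteq> R \<longrightarrow> y \<in> R"
    proof (intro ballI impI)
      fix R assume R: "R \<in> XX" "P \<subseteq> R" "set cs \<subseteq> R"
      have "f P \<in> R" using f P R(2) by blast
      moreover have "im B (f P) y \<in> R" using R(3) P cl unfolding cs_def C_def by auto
      ultimately show "y \<in> R" using filt_mp[OF X_filt[OF R(1)] _ _ y(1)] by blast
    qed
    then show "d \<in> P" unfolding d_def using imps_in[OF PX csc y(1)] by blast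
  qed
  then have "d \<in> Q" using sub dc by blast
  moreover have "set cs \<subseteq> Q" unfolding cs_def using cl y(3) by auto
  ultimately have "y \<in> Q" using imps_in[OF Q csc y(1)] Q unfolding d_def by blast
  then show False using y(2) by blast
qed

definition finv where "finv w \<longleftrightarrow> (\<forall>m. \<exists>C. finite C \<and> C \<subseteq> car B \<and> w m = UU C)"

lemma upv_finv: "finv w \<Longrightarrow> upv XX w"
  unfolding finv_def upv_def using UU_up by metis

lemma fin_val:
  fixes \<phi> :: "'v fm"
  assumes "syms \<phi> \<subseteq> L" and fw: "finv w"
  shows "\<exists>C. finite C \<and> C \<subseteq> car B \<and> eval (Up XX (\<subseteq>)) w \<phi> = UU C"
  using assms(1)
proof (induction \<phi>)
  case (Var x)
  then show ?case using fw unfolding finv_def by simp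
next
  case Top
  show ?case by (rule exI[of _ "{}"]) (simp add: UU_def)
next
  case Bot
  then have Z: "Zero \<in> L" by simp
  show ?case by (rule exI[of _ "{zr B}"]) (auto simp: UU_def zrB[OF Z] zr_in[OF Z])
next
  case (And a b)
  then obtain C1 C2 where C: "finite C1" "C1 \<subseteq> car B" "eval (Up XX (\<subseteq>)) w a = UU C1"
    "finite C2" "C2 \<subseteq> car B" "eval (Up XX (\<subseteq>)) w b = UU C2" by auto
  show ?case by (rule exI[of _ "C1 \<union> C2"]) (auto simp: C UU_def)
next
  case (Or a b)
  then have J: "Join \<in> L" by simp
  from Or obtain C1 C2 where C: "finite C1" "C1 \<subseteq> car B" "eval (Up XX (\<subseteq>)) w a = UU C1"
    "finite C2" "C2 \<subseteq> car B" "eval (Up XX (\<subseteq>)) w b = UU C2" by auto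
  define D where "D = (\<lambda>(x, y). jn B x y) ` (C1 \<times> C2)"
  have "finite D" unfolding D_def using C by simp
  moreover have "D \<subseteq> car B"
  proof
    fix d assume "d \<in> D"
    then obtain x y where "x \<in> C1" "y \<in> C2" "d = jn B x y" unfolding D_def by auto
    then show "d \<in> car B" using C(2,5) jnB[OF J] by blast
  qed
  moreover have "UU C1 \<union> UU C2 = UU D"
  proof (rule set_eqI)
    fix P
    show "P \<in> UU C1 \<union> UU C2 \<longleftrightarrow> P \<in> UU D"
    proof
      assume "P \<in> UU C1 \<union> UU C2"
      then have PX: "P \<in> XX" and or: "C1 \<subseteq> P \<or> C2 \<subseteq> P" unfolding UU_def by auto
      have "D \<subseteq> P"
      proof
        fix d assume "d \<in> D"
        then obtain x y where xy: "x \<in> C1" "y \<in> C2" "d = jn B x y" unfolding D_def by auto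
        have "x \<in> car B" "y \<in> car B" using xy C(2,5) by auto
        then show "d \<in> P" using jn_in[OF J PX] xy or by auto
      qed
      then show "P \<in> UU D" unfolding UU_def using PX by blast
    next
      assume P: "P \<in> UU D"
      then have PX: "P \<in> XX" and DP: "D \<subseteq> P" unfolding UU_def by auto
      show "P \<in> UU C1 \<union> UU C2"
      proof (rule ccontr)
        assume "P \<notin> UU C1 \<union> UU C2"
        then obtain x y where "x \<in> C1" "x \<notin> P" "y \<in> C2" "y \<notin> P" unfolding UU_def using PX by auto
        moreover then have "jn B x y \<in> P" using DP unfolding D_def by auto
        ultimately show False using jn_in[OF J PX] C by blast
      qed
    qed
  qed
  ultimately show ?case using C by auto
next
  case (Impl a b)
  then obtain C1 C2 where C: "finite C1" "C1 \<subseteq> car B" "eval (Up XX (\<subseteq>)) w a = UU C1"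
    "finite C2" "C2 \<subseteq> car B" "eval (Up XX (\<subseteq>)) w b = UU C2" by auto
  obtain cl where cl: "set cl = C1" using finite_list[OF C(1)] by blast
  define D where "D = (\<lambda>c. impsB cl c) ` C2"
  have "finite D" unfolding D_def using C by simp
  moreover have Dc: "D \<subseteq> car B" unfolding D_def using C cl impsB_car by auto
  moreover have "eval (Up XX (\<subseteq>)) w (Impl a b) = UU D"
  proof (rule set_eqI)
    fix P
    have "P \<in> eval (Up XX (\<subseteq>)) w (Impl a b) \<longleftrightarrow> P \<in> XX \<and> (\<forall>Q\<in>XX. P \<subseteq> Q \<longrightarrow> C1 \<subseteq> Q \<longrightarrow> C2 \<subseteq> Q)"
      using mem_Impl[OF upv_finv[OF fw], of P a b] C unfolding UU_def by auto
    also have "\<dots> \<longleftrightarrow> P \<in> UU D"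
    proof
      assume A: "P \<in> XX \<and> (\<forall>Q\<in>XX. P \<subseteq> Q \<longrightarrow> C1 \<subseteq> Q \<longrightarrow> C2 \<subseteq> Q)"
      have "\<forall>c\<in>C2. impsB cl c \<in> P"
      proof
        fix c assume c: "c \<in> C2"
        then have cc: "c \<in> car B" using C by blast
        show "impsB cl c \<in> P" using imps_in[of P cl c] A cl C(2) cc c by blast
      qed
      then show "P \<in> UU D" unfolding UU_def D_def using A by blast
    next
      assume A: "P \<in> UU D"
      then have PX: "P \<in> XX" and DP: "D \<subseteq> P" unfolding UU_def by auto
      have "\<forall>Q\<in>XX. P \<subseteq> Q \<longrightarrow> C1 \<subseteq> Q \<longrightarrow> C2 \<subseteq> Q"
      proof (intro ballI impI subsetI)
        fix Q c assume Q: "Q \<in> XX" "P \<subseteq> Q" "C1 \<subseteq> Q" and c: "c \<in> C2"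
        have "impsB cl c \<in> P" using DP c unfolding D_def by blast
        then show "c \<in> Q" using imps_in[of P cl c] PX cl C(2) C(5) c Q by blast
      qed
      then show "P \<in> XX \<and> (\<forall>Q\<in>XX. P \<subseteq> Q \<longrightarrow> C1 \<subseteq> Q \<longrightarrow> C2 \<subseteq> Q)" using PX by blast
    qed
    finally show "P \<in> eval (Up XX (\<subseteq>)) w (Impl a b) \<longleftrightarrow> P \<in> UU D" .
  qed
  ultimately show ?case by blast
next
  case (Not a)
  then have N: "Neg \<in> L" by simp
  from Not obtain C1 where C: "finite C1" "C1 \<subseteq> car B" "eval (Up XX (\<subseteq>)) w a = UU C1" by auto
  show ?case
  proof (cases "car B = {}")
    case True
    then have "XX = {}" using X_proper by blast
    then show ?thesis by (intro exI[of _ "{}"]) (simp add: UU_def)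
  next
    case False
    then obtain b0 where b0: "b0 \<in> car B" by blast
    define z where "z = ng B one"
    have zc: "z \<in> car B" unfolding z_def using ngB[OF N one_in[OF b0]] .
    have zP: "\<forall>P\<in>XX. z \<notin> P"
    proof (intro ballI notI)
      fix P assume P: "P \<in> XX" "z \<in> P"
      have "one \<in> P" using filt_one[OF X_filt[OF P(1)] b0] .
      then show False using ng_in[OF N P(1) one_in[OF b0]] P unfolding z_def by blast
    qed
    obtain cl where cl: "set cl = C1" using finite_list[OF C(1)] by blast
    have dc: "impsB cl z \<in> car B" using impsB_car cl C(2) zc by blast
    have "eval (Up XX (\<subseteq>)) w (Not a) = UU {impsB cl z}"
    proof (rule set_eqI)
      fix P
      have "P \<in> eval (Up XX (\<subseteq>)) w (Not a) \<longleftrightarrow> P \<in> XX \<and> (\<forall>Q\<in>XX. P \<subseteq> Q \<longrightarrow> \<not> C1 \<subseteq> Q)"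
        using mem_Not[OF upv_finv[OF fw], of P a] C unfolding UU_def by auto
      also have "\<dots> \<longleftrightarrow> P \<in> UU {impsB cl z}"
        unfolding UU_def using imps_in[of P cl z] cl C(2) zc zP by auto
      finally show "P \<in> eval (Up XX (\<subseteq>)) w (Not a) \<longleftrightarrow> P \<in> UU {impsB cl z}" .
    qed
    then show ?thesis using dc by (intro exI[of _ "{impsB cl z}"]) simp
  qed
qed

end

lemma mono_ev:
  assumes v: "upv X v" and v': "upv X v'" and le: "\<forall>n. v n \<subseteq> v' n"
  shows "(pos \<phi> \<longrightarrow> eval (Up X (\<subseteq>)) v \<phi> \<subseteq> eval (Up X (\<subseteq>)) v' \<phi>) \<and>
         (neg \<phi> \<longrightarrow> eval (Up X (\<subseteq>)) v' \<phi> \<subseteq> eval (Up X (\<subseteq>)) v \<phi>)"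
proof (induction \<phi>)
  case (Var x)
  then show ?case using le by simp
next
  case Top
  then show ?case by simp
next
  case Bot
  then show ?case by simp
next
  case (And a b)
  then show ?case by auto
next
  case (Or a b)
  then show ?case by auto
next
  case (Impl a b)
  show ?case
  proof (intro conjI impI subsetI)
    fix x assume p: "pos (Impl a b)" and x: "x \<in> eval (Up X (\<subseteq>)) v (Impl a b)"
    have na: "neg a" and pb: "pos b" using p by auto
    show "x \<in> eval (Up X (\<subseteq>)) v' (Impl a b)"
      using x Impl.IH na pb mem_Impl[OF v, of x a b] mem_Impl[OF v', of x a b] by blast
  next
    fix x assume p: "neg (Impl a b)" and x: "x \<in> eval (Up X (\<subseteq>)) v' (Impl a b)"
    have na: "pos a" and pb: "neg b" using p by auto
    show "x \<in> eval (Up X (\<subseteq>)) v (Impl a b)"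
      using x Impl.IH na pb mem_Impl[OF v, of x a b] mem_Impl[OF v', of x a b] by blast
  qed
next
  case (Not a)
  show ?case
  proof (intro conjI impI subsetI)
    fix x assume p: "pos (Not a)" and x: "x \<in> eval (Up X (\<subseteq>)) v (Not a)"
    have na: "neg a" using p by auto
    show "x \<in> eval (Up X (\<subseteq>)) v' (Not a)"
      using x Not.IH na mem_Not[OF v, of x a] mem_Not[OF v', of x a] by blast
  next
    fix x assume p: "neg (Not a)" and x: "x \<in> eval (Up X (\<subseteq>)) v' (Not a)"
    have na: "pos a" using p by auto
    show "x \<in> eval (Up X (\<subseteq>)) v (Not a)"
      using x Not.IH na mem_Not[OF v, of x a] mem_Not[OF v', of x a] by blast
  qed
qed

context sett
begin

definition gF where "gF A = {c \<in> car B. \<forall>G. filt G \<longrightarrow> A \<subseteq> G \<longrightarrow> c \<in> G}"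

lemma gF_filt: assumes "A \<subseteq> car B" shows "filt (gF A)"
  unfolding impl_filter_def
proof (intro conjI)
  show "gF A \<subseteq> car B" unfolding gF_def by blast
  show "\<forall>a\<in>car B. im B a a \<in> gF A" unfolding gF_def using imB filt_one' by blast
  show "\<forall>a b. a \<in> gF A \<longrightarrow> im B a b \<in> gF A \<longrightarrow> b \<in> car B \<longrightarrow> b \<in> gF A"
  proof (intro allI impI)
    fix a b assume a: "a \<in> gF A" and ab: "im B a b \<in> gF A" and b: "b \<in> car B"
    have "\<forall>G. filt G \<longrightarrow> A \<subseteq> G \<longrightarrow> b \<in> G"
    proof (intro allI impI)
      fix G assume G: "filt G" "A \<subseteq> G"
      have "a \<in> G" "im B a b \<in> G" using a ab G unfolding gF_def by auto
      then show "b \<in> G" using filt_mp[OF G(1) _ _ b] by blast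
    qed
    then show "b \<in> gF A" unfolding gF_def using b by blast
  qed
qed

lemma gF_sup: "A \<subseteq> car B \<Longrightarrow> A \<subseteq> gF A"
  unfolding gF_def by blast

lemma gF_least: "filt G \<Longrightarrow> A \<subseteq> G \<Longrightarrow> gF A \<subseteq> G"
  unfolding gF_def by blast

lemma compact:
  fixes T :: "'i set" and aS nS :: "'i \<Rightarrow> 'b set"
  assumes Tne: "T \<noteq> {}" and Q: "Q \<in> XX"
    and fa: "\<forall>t\<in>T. finite (aS t) \<and> aS t \<subseteq> car B"
    and fn: "\<forall>t\<in>T. finite (nS t) \<and> nS t \<subseteq> car B"
    and dir: "\<forall>t1\<in>T. \<forall>t2\<in>T. \<exists>t\<in>T. UU (aS t) \<subseteq> UU (aS t1) \<and> UU (aS t) \<subseteq> UU (aS t2) \<and>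
       UU (nS t1) \<subseteq> UU (nS t) \<and> UU (nS t2) \<subseteq> UU (nS t)"
    and wit: "\<forall>t\<in>T. \<exists>R\<in>XX. Q \<subseteq> R \<and> R \<in> UU (aS t) \<and> R \<notin> UU (nS t)"
  shows "\<exists>R\<in>XX. Q \<subseteq> R \<and> (\<forall>t\<in>T. R \<in> UU (aS t) \<and> R \<notin> UU (nS t))"
proof -
  have Qc: "Q \<subseteq> car B" using X_sub[OF Q] .
  define Qt where "Qt t = gF (Q \<union> aS t)" for t
  have Qac: "Q \<union> aS t \<subseteq> car B" if "t \<in> T" for t
    using Qc fa that by auto
  have Qt_filt: "filt (Qt t)" if "t \<in> T" for t
    unfolding Qt_def using gF_filt[OF Qac[OF that]] .
  have Qt_sup: "Q \<union> aS t \<subseteq> Qt t" if "t \<in> T" for t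
    unfolding Qt_def using gF_sup[OF Qac[OF that]] .
  have Qt_mono: "Qt t1 \<subseteq> Qt t" if t1: "t1 \<in> T" and t: "t \<in> T" and sub: "UU (aS t) \<subseteq> UU (aS t1)" for t1 t
  proof
    fix c assume c: "c \<in> Qt t1"
    show "c \<in> Qt t"
    proof (rule ccontr)
      assume nc: "c \<notin> Qt t"
      have cc: "c \<in> car B" using c unfolding Qt_def gF_def by blast
      obtain R where R: "R \<in> XX" "Qt t \<subseteq> R" "c \<notin> R" using Z1[OF Qt_filt[OF t] cc nc] by blast
      have "R \<in> UU (aS t)" unfolding UU_def using R Qt_sup[OF t] by blast
      then have "R \<in> UU (aS t1)" using sub by blast
      then have "Q \<union> aS t1 \<subseteq> R" unfolding UU_def using R(2) Qt_sup[OF t] by blast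
      then have "Qt t1 \<subseteq> R" unfolding Qt_def using gF_least X_filt[OF R(1)] by blast
      then show False using c R(3) by blast
    qed
  qed
  have dirQ: "\<exists>t\<in>T. Qt t1 \<subseteq> Qt t \<and> Qt t2 \<subseteq> Qt t" if t12: "t1 \<in> T" "t2 \<in> T" for t1 t2
  proof -
    obtain t where t: "t \<in> T" "UU (aS t) \<subseteq> UU (aS t1)" "UU (aS t) \<subseteq> UU (aS t2)"
      using dir[rule_format, OF t12] by (elim bexE conjE) (rule that)
    have "Qt t1 \<subseteq> Qt t" using Qt_mono[OF t12(1) t(1) t(2)] .
    moreover have "Qt t2 \<subseteq> Qt t" using Qt_mono[OF t12(2) t(1) t(3)] .
    ultimately show ?thesis using t(1) by blast
  qed
  define R0 where "R0 = \<Union>(Qt ` T)"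
  have R0f: "filt R0" unfolding impl_filter_def
  proof (intro conjI)
    show "R0 \<subseteq> car B" unfolding R0_def using Qt_filt filt_sub by blast
    show "\<forall>a\<in>car B. im B a a \<in> R0"
    proof
      fix a assume a: "a \<in> car B"
      obtain t where t: "t \<in> T" using Tne by blast
      show "im B a a \<in> R0" unfolding R0_def using filt_one'[OF Qt_filt[OF t] a] t by blast
    qed
    show "\<forall>a b. a \<in> R0 \<longrightarrow> im B a b \<in> R0 \<longrightarrow> b \<in> car B \<longrightarrow> b \<in> R0"
    proof (intro allI impI)
      fix a b assume a: "a \<in> R0" and ab: "im B a b \<in> R0" and b: "b \<in> car B"
      obtain t1 where t1: "t1 \<in> T" "a \<in> Qt t1" using a unfolding R0_def by blast
      obtain t2 where t2: "t2 \<in> T" "im B a b \<in> Qt t2" using ab unfolding R0_def by blast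
      obtain t where t: "t \<in> T" "Qt t1 \<subseteq> Qt t" "Qt t2 \<subseteq> Qt t" using dirQ[OF t1(1) t2(1)] by blast
      have "b \<in> Qt t" using filt_mp[OF Qt_filt[OF t(1)] _ _ b] t t1 t2 by blast
      then show "b \<in> R0" unfolding R0_def using t(1) by blast
    qed
  qed
  have finQ: "\<exists>t\<in>T. N \<subseteq> Qt t" if "finite N" "N \<subseteq> R0" for N
    using that
  proof (induction N rule: finite_induct)
    case empty
    then show ?case using Tne by blast
  next
    case (insert x N)
    then obtain t1 where t1: "t1 \<in> T" "N \<subseteq> Qt t1" by blast
    obtain t2 where t2: "t2 \<in> T" "x \<in> Qt t2" using insert.prems unfolding R0_def by blast
    obtain t where t: "t \<in> T" "Qt t1 \<subseteq> Qt t" "Qt t2 \<subseteq> Qt t" using dirQ[OF t1(1) t2(1)] by blast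
    then show ?case using t1 t2 by blast
  qed
  have nR0: "\<forall>t\<in>T. \<not> nS t \<subseteq> R0"
  proof (intro ballI notI)
    fix t assume t: "t \<in> T" and sub: "nS t \<subseteq> R0"
    obtain t' where t': "t' \<in> T" "nS t \<subseteq> Qt t'" using finQ[OF _ sub] fn t by blast
    obtain t'' where t'': "t'' \<in> T" "UU (aS t'') \<subseteq> UU (aS t')" "UU (nS t) \<subseteq> UU (nS t'')"
      using dir[rule_format, OF t'(1) t] by (elim bexE conjE) (rule that)
    have "Qt t' \<subseteq> Qt t''" using Qt_mono[OF t'(1) t''(1) t''(2)] .
    obtain R where R: "R \<in> XX" "Q \<subseteq> R" "R \<in> UU (aS t'')" "R \<notin> UU (nS t'')" using wit t''(1) by blast
    have "Q \<union> aS t'' \<subseteq> R" using R unfolding UU_def by blast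
    then have "Qt t'' \<subseteq> R" unfolding Qt_def using gF_least X_filt[OF R(1)] by blast
    then have "nS t \<subseteq> R" using t'(2) \<open>Qt t' \<subseteq> Qt t''\<close> by blast
    then have "R \<in> UU (nS t)" unfolding UU_def using R(1) by blast
    then show False using t''(3) R(4) by blast
  qed
  have finn: "\<forall>t\<in>T. finite (nS t)" using fn by blast
  obtain M where M: "filt M" "R0 \<subseteq> M" "\<forall>t\<in>T. \<not> nS t \<subseteq> M"
    and mx: "\<forall>G. filt G \<longrightarrow> M \<subseteq> G \<longrightarrow> (\<forall>t\<in>T. \<not> nS t \<subseteq> G) \<longrightarrow> G = M"
    using zorn_filt[OF R0f finn nR0] by blast
  obtain t0 where t0: "t0 \<in> T" using Tne by blast
  obtain b where b: "b \<in> nS t0" "b \<notin> M" using M(3) t0 by blast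
  have bc: "b \<in> car B" using b fn t0 by blast
  have MX: "M \<in> XX"
  proof (rule mk_X[OF M(1) bc b(2)])
    fix G1 G2 assume G: "filt G1" "filt G2" "G1 \<noteq> M" "G2 \<noteq> M" "M = G1 \<inter> G2"
    obtain t1 where t1: "t1 \<in> T" "nS t1 \<subseteq> G1" using mx G by blast
    obtain t2 where t2: "t2 \<in> T" "nS t2 \<subseteq> G2" using mx G by blast
    obtain t where t: "t \<in> T" "UU (nS t1) \<subseteq> UU (nS t)" "UU (nS t2) \<subseteq> UU (nS t)"
      using dir[rule_format, OF t1(1) t2(1)] by (elim bexE conjE) (rule that)
    have "nS t \<subseteq> G1"
    proof
      fix x assume x: "x \<in> nS t"
      show "x \<in> G1"
      proof (rule ccontr)
        assume "x \<notin> G1"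
        then obtain R where R: "R \<in> XX" "G1 \<subseteq> R" "x \<notin> R" using Z1[OF G(1)] x fn t(1) by blast
        have "R \<in> UU (nS t1)" unfolding UU_def using R t1 by blast
        then have "R \<in> UU (nS t)" using t(2) by blast
        then show False using x R(3) unfolding UU_def by blast
      qed
    qed
    moreover have "nS t \<subseteq> G2"
    proof
      fix x assume x: "x \<in> nS t"
      show "x \<in> G2"
      proof (rule ccontr)
        assume "x \<notin> G2"
        then obtain R where R: "R \<in> XX" "G2 \<subseteq> R" "x \<notin> R" using Z1[OF G(2)] x fn t(1) by blast
        have "R \<in> UU (nS t2)" unfolding UU_def using R t2 by blast
        then have "R \<in> UU (nS t)" using t(3) by blast
        then show False using x R(3) unfolding UU_def by blast
      qed
    qed
    ultimately have "nS t \<subseteq> M" using G(5) by blast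
    then show False using M(3) t(1) by blast
  qed
  have "Q \<subseteq> M" using M(2) Qt_sup t0 unfolding R0_def by blast
  moreover have "\<forall>t\<in>T. M \<in> UU (aS t) \<and> M \<notin> UU (nS t)"
  proof
    fix t assume t: "t \<in> T"
    have "aS t \<subseteq> M" using M(2) Qt_sup[OF t] t unfolding R0_def by blast
    then show "M \<in> UU (aS t) \<and> M \<notin> UU (nS t)" unfolding UU_def using MX M(3) t by blast
  qed
  ultimately show ?thesis using MX by blast
qed

end

locale esak = sett L H S B for L :: "opsym set" and H :: "'a alg" and S :: "'a set" and B :: "'b alg" +
  fixes D :: "nat \<Rightarrow> 'b set"
  assumes Dc: "\<And>m. D m \<subseteq> car B"
begin

definition vD where "vD m = UU (D m)"
definition TT where "TT = {E :: nat \<Rightarrow> 'b set. (\<forall>m. finite (E m) \<and> E m \<subseteq> D m) \<and> finite {m. E m \<noteq> {}}}"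
definition wE where "wE E m = UU (E m)"
definition leE where "leE E E' \<longleftrightarrow> (\<forall>m. E m \<subseteq> E' m)"
definition EV where "EV Pr \<longleftrightarrow> (\<exists>E\<in>TT. \<forall>E'\<in>TT. leE E E' \<longrightarrow> Pr E')"

lemma E0: "(\<lambda>_. {}) \<in> TT"
  unfolding TT_def by simp

lemma joinT: assumes "E1 \<in> TT" "E2 \<in> TT" shows "(\<lambda>m. E1 m \<union> E2 m) \<in> TT"
proof -
  have "{m. E1 m \<union> E2 m \<noteq> {}} = {m. E1 m \<noteq> {}} \<union> {m. E2 m \<noteq> {}}" by auto
  then show ?thesis using assms unfolding TT_def by auto
qed

lemma leE_join: "leE E1 (\<lambda>m. E1 m \<union> E2 m)" "leE E2 (\<lambda>m. E1 m \<union> E2 m)"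
  unfolding leE_def by auto

lemma leE_trans: "leE E1 E2 \<Longrightarrow> leE E2 E3 \<Longrightarrow> leE E1 E3"
  unfolding leE_def by blast

lemma leE_refl: "leE E E"
  unfolding leE_def by blast

lemma EV_true: "(\<And>E. Pr E) \<Longrightarrow> EV Pr"
  unfolding EV_def using E0 by blast

lemma EV_conj: assumes "EV P1" "EV P2" shows "EV (\<lambda>E. P1 E \<and> P2 E)"
proof -
  obtain E1 where E1: "E1 \<in> TT" "\<forall>E'\<in>TT. leE E1 E' \<longrightarrow> P1 E'" using assms(1) unfolding EV_def by blast
  obtain E2 where E2: "E2 \<in> TT" "\<forall>E'\<in>TT. leE E2 E' \<longrightarrow> P2 E'" using assms(2) unfolding EV_def by blast
  have J: "(\<lambda>m. E1 m \<union> E2 m) \<in> TT" using joinT[OF E1(1) E2(1)] .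
  have "\<forall>E'\<in>TT. leE (\<lambda>m. E1 m \<union> E2 m) E' \<longrightarrow> P1 E' \<and> P2 E'"
    using E1(2) E2(2) leE_join leE_trans by blast
  then show ?thesis unfolding EV_def using J by blast
qed

lemma EV_mono: "EV P1 \<Longrightarrow> (\<And>E. P1 E \<Longrightarrow> P2 E) \<Longrightarrow> EV P2"
  unfolding EV_def by blast

lemma EV_ex: "EV P1 \<Longrightarrow> \<exists>E\<in>TT. P1 E"
  unfolding EV_def using leE_refl by blast

lemma upv_vD: "upv XX vD"
  unfolding upv_def vD_def using UU_up by blast

lemma upv_wE: "upv XX (wE E)"
  unfolding upv_def wE_def using UU_up by blast

lemma finv_wE: assumes "E \<in> TT" shows "finv (wE E)"
  unfolding finv_def wE_def
proof
  fix m
  have "finite (E m)" "E m \<subseteq> D m" using assms unfolding TT_def by auto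
  then show "\<exists>C. finite C \<and> C \<subseteq> car B \<and> UU (E m) = UU C" using Dc by blast
qed

lemma wE_anti: "leE E E' \<Longrightarrow> wE E' m \<subseteq> wE E m"
  unfolding leE_def wE_def UU_def by blast

lemma vD_le: "E \<in> TT \<Longrightarrow> vD m \<subseteq> wE E m"
  unfolding TT_def vD_def wE_def UU_def by blast

lemma mono_wE:
  assumes "leE E E'"
  shows "(pos \<phi> \<longrightarrow> eval (Up XX (\<subseteq>)) (wE E') \<phi> \<subseteq> eval (Up XX (\<subseteq>)) (wE E) \<phi>) \<and>
         (neg \<phi> \<longrightarrow> eval (Up XX (\<subseteq>)) (wE E) \<phi> \<subseteq> eval (Up XX (\<subseteq>)) (wE E') \<phi>)"
  using mono_ev[OF upv_wE upv_wE, of E' E \<phi>] wE_anti[OF assms] by blast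

lemma mono_vD:
  assumes "E \<in> TT"
  shows "(pos \<phi> \<longrightarrow> eval (Up XX (\<subseteq>)) vD \<phi> \<subseteq> eval (Up XX (\<subseteq>)) (wE E) \<phi>) \<and>
         (neg \<phi> \<longrightarrow> eval (Up XX (\<subseteq>)) (wE E) \<phi> \<subseteq> eval (Up XX (\<subseteq>)) vD \<phi>)"
  using mono_ev[OF upv_vD upv_wE, of E \<phi>] vD_le[OF assms] by blast

lemma compact_step:
  fixes a b :: "nat fm"
  assumes P: "P \<in> XX" and pa: "pos a" and nb: "neg b"
    and fa: "\<forall>E\<in>TT. \<exists>C. finite C \<and> C \<subseteq> car B \<and> eval (Up XX (\<subseteq>)) (wE E) a = UU C"
    and fb: "\<forall>E\<in>TT. \<exists>C. finite C \<and> C \<subseteq> car B \<and> eval (Up XX (\<subseteq>)) (wE E) b = UU C"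
    and hyp: "\<forall>E\<in>TT. \<exists>R\<in>XX. P \<subseteq> R \<and> R \<in> eval (Up XX (\<subseteq>)) (wE E) a \<and> R \<notin> eval (Up XX (\<subseteq>)) (wE E) b"
  shows "\<exists>R\<in>XX. P \<subseteq> R \<and> (\<forall>E\<in>TT. R \<in> eval (Up XX (\<subseteq>)) (wE E) a \<and> R \<notin> eval (Up XX (\<subseteq>)) (wE E) b)"
proof -
  define aS where "aS E = (SOME C. finite C \<and> C \<subseteq> car B \<and> eval (Up XX (\<subseteq>)) (wE E) a = UU C)" for E
  define nS where "nS E = (SOME C. finite C \<and> C \<subseteq> car B \<and> eval (Up XX (\<subseteq>)) (wE E) b = UU C)" for E
  have aS: "finite (aS E) \<and> aS E \<subseteq> car B \<and> eval (Up XX (\<subseteq>)) (wE E) a = UU (aS E)" if "E \<in> TT" for E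
    unfolding aS_def using someI_ex[OF fa[rule_format, OF that]] .
  have nS: "finite (nS E) \<and> nS E \<subseteq> car B \<and> eval (Up XX (\<subseteq>)) (wE E) b = UU (nS E)" if "E \<in> TT" for E
    unfolding nS_def using someI_ex[OF fb[rule_format, OF that]] .
  have "\<exists>R\<in>XX. P \<subseteq> R \<and> (\<forall>t\<in>TT. R \<in> UU (aS t) \<and> R \<notin> UU (nS t))"
  proof (rule compact[OF _ P])
    show "TT \<noteq> {}" using E0 by blast
    show "\<forall>t\<in>TT. finite (aS t) \<and> aS t \<subseteq> car B" using aS by blast
    show "\<forall>t\<in>TT. finite (nS t) \<and> nS t \<subseteq> car B" using nS by blast
    show "\<forall>t1\<in>TT. \<forall>t2\<in>TT. \<exists>t\<in>TT. UU (aS t) \<subseteq> UU (aS t1) \<and> UU (aS t) \<subseteq> UU (aS t2) \<and>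
       UU (nS t1) \<subseteq> UU (nS t) \<and> UU (nS t2) \<subseteq> UU (nS t)"
    proof (intro ballI)
      fix t1 t2 assume t1: "t1 \<in> TT" and t2: "t2 \<in> TT"
      define J where "J = (\<lambda>m. t1 m \<union> t2 m)"
      have J: "J \<in> TT" unfolding J_def using joinT[OF t1 t2] .
      have l1: "leE t1 J" and l2: "leE t2 J" unfolding J_def using leE_join by auto
      have "UU (aS J) \<subseteq> UU (aS t1)" using aS[OF J] aS[OF t1] mono_wE[OF l1, of a] pa by simp
      moreover have "UU (aS J) \<subseteq> UU (aS t2)" using aS[OF J] aS[OF t2] mono_wE[OF l2, of a] pa by simp
      moreover have "UU (nS t1) \<subseteq> UU (nS J)" using nS[OF J] nS[OF t1] mono_wE[OF l1, of b] nb by simp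
      moreover have "UU (nS t2) \<subseteq> UU (nS J)" using nS[OF J] nS[OF t2] mono_wE[OF l2, of b] nb by simp
      ultimately show "\<exists>t\<in>TT. UU (aS t) \<subseteq> UU (aS t1) \<and> UU (aS t) \<subseteq> UU (aS t2) \<and>
       UU (nS t1) \<subseteq> UU (nS t) \<and> UU (nS t2) \<subseteq> UU (nS t)" using J by blast
    qed
    show "\<forall>t\<in>TT. \<exists>R\<in>XX. P \<subseteq> R \<and> R \<in> UU (aS t) \<and> R \<notin> UU (nS t)"
    proof
      fix t assume t: "t \<in> TT"
      then obtain R where "R \<in> XX" "P \<subseteq> R" "R \<in> eval (Up XX (\<subseteq>)) (wE t) a" "R \<notin> eval (Up XX (\<subseteq>)) (wE t) b"
        using hyp by blast
      then show "\<exists>R\<in>XX. P \<subseteq> R \<and> R \<in> UU (aS t) \<and> R \<notin> UU (nS t)" using aS[OF t] nS[OF t] by auto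
    qed
  qed
  then obtain R where R: "R \<in> XX" "P \<subseteq> R" "\<forall>t\<in>TT. R \<in> UU (aS t) \<and> R \<notin> UU (nS t)" by blast
  have "\<forall>E\<in>TT. R \<in> eval (Up XX (\<subseteq>)) (wE E) a \<and> R \<notin> eval (Up XX (\<subseteq>)) (wE E) b"
    using R(3) aS nS by simp
  then show ?thesis using R(1,2) by blast
qed

lemma zlemma: assumes N: "Neg \<in> L" and P: "P \<in> XX" shows "\<exists>z\<in>car B. \<forall>Q\<in>XX. z \<notin> Q"
proof -
  obtain b0 where b0: "b0 \<in> car B" using X_proper[OF P] by blast
  define z where "z = ng B one"
  have zc: "z \<in> car B" unfolding z_def using ngB[OF N one_in[OF b0]] .
  have zP: "\<forall>Q\<in>XX. z \<notin> Q"
  proof (intro ballI notI)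
    fix Q assume Q: "Q \<in> XX" "z \<in> Q"
    have "one \<in> Q" using filt_one[OF X_filt[OF Q(1)] b0] .
    then show False using ng_in[OF N Q(1) one_in[OF b0]] Q unfolding z_def by blast
  qed
  show ?thesis using zc zP by blast
qed

lemma esakia:
  fixes \<phi> :: "nat fm"
  assumes "syms \<phi> \<subseteq> L"
  shows "(pos \<phi> \<longrightarrow> (\<forall>P\<in>XX. P \<notin> eval (Up XX (\<subseteq>)) vD \<phi> \<longrightarrow> EV (\<lambda>E. P \<notin> eval (Up XX (\<subseteq>)) (wE E) \<phi>))) \<and>
         (neg \<phi> \<longrightarrow> (\<forall>P\<in>XX. P \<in> eval (Up XX (\<subseteq>)) vD \<phi> \<longrightarrow> EV (\<lambda>E. P \<in> eval (Up XX (\<subseteq>)) (wE E) \<phi>)))"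
  using assms
proof (induction \<phi>)
  case (Var m)
  show ?case
  proof (intro conjI impI ballI)
    fix P assume P: "P \<in> XX" and nP: "P \<notin> eval (Up XX (\<subseteq>)) vD (Var m)"
    then obtain d where d: "d \<in> D m" "d \<notin> P" unfolding vD_def UU_def by auto
    define E0 where "E0 = (\<lambda>_. {}) (m := {d})"
    have E0T: "E0 \<in> TT"
    proof -
      have "{n. E0 n \<noteq> {}} = {m}" unfolding E0_def by auto
      then show ?thesis unfolding TT_def E0_def using d by auto
    qed
    have "\<forall>E'\<in>TT. leE E0 E' \<longrightarrow> P \<notin> eval (Up XX (\<subseteq>)) (wE E') (Var m)"
    proof (intro ballI impI)
      fix E' assume "E' \<in> TT" "leE E0 E'"
      then have "d \<in> E' m" unfolding leE_def E0_def by force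
      then show "P \<notin> eval (Up XX (\<subseteq>)) (wE E') (Var m)" unfolding wE_def UU_def using d by auto
    qed
    then show "EV (\<lambda>E. P \<notin> eval (Up XX (\<subseteq>)) (wE E) (Var m))" unfolding EV_def using E0T by blast
  next
    fix P assume "neg (Var m)"
    then show "EV (\<lambda>E. P \<in> eval (Up XX (\<subseteq>)) (wE E) (Var m))" by simp
  qed
next
  case Top
  show ?case by (auto intro: EV_true)
next
  case Bot
  show ?case by (auto intro: EV_true)
next
  case (And a b)
  have IHa: "(pos a \<longrightarrow> (\<forall>P\<in>XX. P \<notin> eval (Up XX (\<subseteq>)) vD a \<longrightarrow> EV (\<lambda>E. P \<notin> eval (Up XX (\<subseteq>)) (wE E) a))) \<and>
         (neg a \<longrightarrow> (\<forall>P\<in>XX. P \<in> eval (Up XX (\<subseteq>)) vD a \<longrightarrow> EV (\<lambda>E. P \<in> eval (Up XX (\<subseteq>)) (wE E) a)))"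
    using And by simp
  have IHb: "(pos b \<longrightarrow> (\<forall>P\<in>XX. P \<notin> eval (Up XX (\<subseteq>)) vD b \<longrightarrow> EV (\<lambda>E. P \<notin> eval (Up XX (\<subseteq>)) (wE E) b))) \<and>
         (neg b \<longrightarrow> (\<forall>P\<in>XX. P \<in> eval (Up XX (\<subseteq>)) vD b \<longrightarrow> EV (\<lambda>E. P \<in> eval (Up XX (\<subseteq>)) (wE E) b)))"
    using And by simp
  show ?case
  proof (intro conjI impI ballI)
    fix P assume p: "pos (And a b)" and P: "P \<in> XX" and nP: "P \<notin> eval (Up XX (\<subseteq>)) vD (And a b)"
    show "EV (\<lambda>E. P \<notin> eval (Up XX (\<subseteq>)) (wE E) (And a b))"
    proof (cases "P \<in> eval (Up XX (\<subseteq>)) vD a")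
      case True
      then have "P \<notin> eval (Up XX (\<subseteq>)) vD b" using nP by simp
      then have "EV (\<lambda>E. P \<notin> eval (Up XX (\<subseteq>)) (wE E) b)" using IHb p P by simp
      then show ?thesis by (rule EV_mono) simp
    next
      case False
      then have "EV (\<lambda>E. P \<notin> eval (Up XX (\<subseteq>)) (wE E) a)" using IHa p P by simp
      then show ?thesis by (rule EV_mono) simp
    qed
  next
    fix P assume p: "neg (And a b)" and P: "P \<in> XX" and nP: "P \<in> eval (Up XX (\<subseteq>)) vD (And a b)"
    have "EV (\<lambda>E. P \<in> eval (Up XX (\<subseteq>)) (wE E) a)" using IHa p P nP by simp
    moreover have "EV (\<lambda>E. P \<in> eval (Up XX (\<subseteq>)) (wE E) b)" using IHb p P nP by simp
    ultimately show "EV (\<lambda>E. P \<in> eval (Up XX (\<subseteq>)) (wE E) (And a b))"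
      using EV_conj by simp
  qed
next
  case (Or a b)
  have IHa: "(pos a \<longrightarrow> (\<forall>P\<in>XX. P \<notin> eval (Up XX (\<subseteq>)) vD a \<longrightarrow> EV (\<lambda>E. P \<notin> eval (Up XX (\<subseteq>)) (wE E) a))) \<and>
         (neg a \<longrightarrow> (\<forall>P\<in>XX. P \<in> eval (Up XX (\<subseteq>)) vD a \<longrightarrow> EV (\<lambda>E. P \<in> eval (Up XX (\<subseteq>)) (wE E) a)))"
    using Or by simp
  have IHb: "(pos b \<longrightarrow> (\<forall>P\<in>XX. P \<notin> eval (Up XX (\<subseteq>)) vD b \<longrightarrow> EV (\<lambda>E. P \<notin> eval (Up XX (\<subseteq>)) (wE E) b))) \<and>
         (neg b \<longrightarrow> (\<forall>P\<in>XX. P \<in> eval (Up XX (\<subseteq>)) vD b \<longrightarrow> EV (\<lambda>E. P \<in> eval (Up XX (\<subseteq>)) (wE E) b)))"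
    using Or by simp
  show ?case
  proof (intro conjI impI ballI)
    fix P assume p: "pos (Or a b)" and P: "P \<in> XX" and nP: "P \<notin> eval (Up XX (\<subseteq>)) vD (Or a b)"
    have "EV (\<lambda>E. P \<notin> eval (Up XX (\<subseteq>)) (wE E) a)" using IHa p P nP by simp
    moreover have "EV (\<lambda>E. P \<notin> eval (Up XX (\<subseteq>)) (wE E) b)" using IHb p P nP by simp
    ultimately show "EV (\<lambda>E. P \<notin> eval (Up XX (\<subseteq>)) (wE E) (Or a b))"
      using EV_conj by simp
  next
    fix P assume p: "neg (Or a b)" and P: "P \<in> XX" and nP: "P \<in> eval (Up XX (\<subseteq>)) vD (Or a b)"
    show "EV (\<lambda>E. P \<in> eval (Up XX (\<subseteq>)) (wE E) (Or a b))"
    proof (cases "P \<in> eval (Up XX (\<subseteq>)) vD a")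
      case True
      then have "EV (\<lambda>E. P \<in> eval (Up XX (\<subseteq>)) (wE E) a)" using IHa p P by simp
      then show ?thesis by (rule EV_mono) simp
    next
      case False
      then have "P \<in> eval (Up XX (\<subseteq>)) vD b" using nP by simp
      then have "EV (\<lambda>E. P \<in> eval (Up XX (\<subseteq>)) (wE E) b)" using IHb p P by simp
      then show ?thesis by (rule EV_mono) simp
    qed
  qed
next
  case (Impl a b)
  have sa: "syms a \<subseteq> L" and sb: "syms b \<subseteq> L" using Impl.prems by auto
  have IHa: "(pos a \<longrightarrow> (\<forall>P\<in>XX. P \<notin> eval (Up XX (\<subseteq>)) vD a \<longrightarrow> EV (\<lambda>E. P \<notin> eval (Up XX (\<subseteq>)) (wE E) a))) \<and>
         (neg a \<longrightarrow> (\<forall>P\<in>XX. P \<in> eval (Up XX (\<subseteq>)) vD a \<longrightarrow> EV (\<lambda>E. P \<in> eval (Up XX (\<subseteq>)) (wE E) a)))"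
    using Impl.IH(1) sa by simp
  have IHb: "(pos b \<longrightarrow> (\<forall>P\<in>XX. P \<notin> eval (Up XX (\<subseteq>)) vD b \<longrightarrow> EV (\<lambda>E. P \<notin> eval (Up XX (\<subseteq>)) (wE E) b))) \<and>
         (neg b \<longrightarrow> (\<forall>P\<in>XX. P \<in> eval (Up XX (\<subseteq>)) vD b \<longrightarrow> EV (\<lambda>E. P \<in> eval (Up XX (\<subseteq>)) (wE E) b)))"
    using Impl.IH(2) sb by simp
  show ?case
  proof (intro conjI impI ballI)
    fix P assume p: "pos (Impl a b)" and P: "P \<in> XX" and nP: "P \<notin> eval (Up XX (\<subseteq>)) vD (Impl a b)"
    have na: "neg a" and pb: "pos b" using p by auto
    obtain Q where Q: "Q \<in> XX" "P \<subseteq> Q" "Q \<in> eval (Up XX (\<subseteq>)) vD a" "Q \<notin> eval (Up XX (\<subseteq>)) vD b"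
      using nP mem_Impl[OF upv_vD, of P a b] P by blast
    have "EV (\<lambda>E. Q \<in> eval (Up XX (\<subseteq>)) (wE E) a)" using IHa na Q by blast
    moreover have "EV (\<lambda>E. Q \<notin> eval (Up XX (\<subseteq>)) (wE E) b)" using IHb pb Q by blast
    ultimately have "EV (\<lambda>E. Q \<in> eval (Up XX (\<subseteq>)) (wE E) a \<and> Q \<notin> eval (Up XX (\<subseteq>)) (wE E) b)"
      by (rule EV_conj)
    then show "EV (\<lambda>E. P \<notin> eval (Up XX (\<subseteq>)) (wE E) (Impl a b))"
    proof (rule EV_mono)
      fix E assume "Q \<in> eval (Up XX (\<subseteq>)) (wE E) a \<and> Q \<notin> eval (Up XX (\<subseteq>)) (wE E) b"
      then show "P \<notin> eval (Up XX (\<subseteq>)) (wE E) (Impl a b)" using mem_Impl[OF upv_wE, of P E a b] Q by blast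
    qed
  next
    fix P assume p: "neg (Impl a b)" and P: "P \<in> XX" and yP: "P \<in> eval (Up XX (\<subseteq>)) vD (Impl a b)"
    have pa: "pos a" and nb: "neg b" using p by auto
    show "EV (\<lambda>E. P \<in> eval (Up XX (\<subseteq>)) (wE E) (Impl a b))"
    proof (rule ccontr)
      assume nEV: "\<not> EV (\<lambda>E. P \<in> eval (Up XX (\<subseteq>)) (wE E) (Impl a b))"
      have hyp: "\<forall>E\<in>TT. \<exists>R\<in>XX. P \<subseteq> R \<and> R \<in> eval (Up XX (\<subseteq>)) (wE E) a \<and> R \<notin> eval (Up XX (\<subseteq>)) (wE E) b"
      proof
        fix E assume E: "E \<in> TT"
        obtain E' where E': "E' \<in> TT" "leE E E'" "P \<notin> eval (Up XX (\<subseteq>)) (wE E') (Impl a b)"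
          using nEV E unfolding EV_def by blast
        obtain R where R: "R \<in> XX" "P \<subseteq> R" "R \<in> eval (Up XX (\<subseteq>)) (wE E') a" "R \<notin> eval (Up XX (\<subseteq>)) (wE E') b"
          using E'(3) mem_Impl[OF upv_wE, of P E' a b] P by blast
        have "R \<in> eval (Up XX (\<subseteq>)) (wE E) a" using R(3) mono_wE[OF E'(2), of a] pa by blast
        moreover have "R \<notin> eval (Up XX (\<subseteq>)) (wE E) b" using R(4) mono_wE[OF E'(2), of b] nb by blast
        ultimately show "\<exists>R\<in>XX. P \<subseteq> R \<and> R \<in> eval (Up XX (\<subseteq>)) (wE E) a \<and> R \<notin> eval (Up XX (\<subseteq>)) (wE E) b"
          using R(1,2) by blast
      qed
      have fa: "\<forall>E\<in>TT. \<exists>C. finite C \<and> C \<subseteq> car B \<and> eval (Up XX (\<subseteq>)) (wE E) a = UU C"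
        using fin_val[OF sa finv_wE] by blast
      have fb: "\<forall>E\<in>TT. \<exists>C. finite C \<and> C \<subseteq> car B \<and> eval (Up XX (\<subseteq>)) (wE E) b = UU C"
        using fin_val[OF sb finv_wE] by blast
      obtain R where R: "R \<in> XX" "P \<subseteq> R"
        "\<forall>E\<in>TT. R \<in> eval (Up XX (\<subseteq>)) (wE E) a \<and> R \<notin> eval (Up XX (\<subseteq>)) (wE E) b"
        using compact_step[OF P pa nb fa fb hyp] by blast
      have Ra: "R \<in> eval (Up XX (\<subseteq>)) vD a"
      proof (rule ccontr)
        assume "R \<notin> eval (Up XX (\<subseteq>)) vD a"
        then have "EV (\<lambda>E. R \<notin> eval (Up XX (\<subseteq>)) (wE E) a)" using IHa pa R(1) by blast
        then obtain E where "E \<in> TT" "R \<notin> eval (Up XX (\<subseteq>)) (wE E) a" using EV_ex by blast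
        then show False using R(3) by blast
      qed
      have Rb: "R \<notin> eval (Up XX (\<subseteq>)) vD b"
      proof
        assume "R \<in> eval (Up XX (\<subseteq>)) vD b"
        then have "EV (\<lambda>E. R \<in> eval (Up XX (\<subseteq>)) (wE E) b)" using IHb nb R(1) by blast
        then obtain E where "E \<in> TT" "R \<in> eval (Up XX (\<subseteq>)) (wE E) b" using EV_ex by blast
        then show False using R(3) by blast
      qed
      show False using yP mem_Impl[OF upv_vD, of P a b] R(1,2) Ra Rb by blast
    qed
  qed
next
  case (Not a)
  have N: "Neg \<in> L" and sa: "syms a \<subseteq> L" using Not.prems by auto
  have IHa: "(pos a \<longrightarrow> (\<forall>P\<in>XX. P \<notin> eval (Up XX (\<subseteq>)) vD a \<longrightarrow> EV (\<lambda>E. P \<notin> eval (Up XX (\<subseteq>)) (wE E) a))) \<and>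
         (neg a \<longrightarrow> (\<forall>P\<in>XX. P \<in> eval (Up XX (\<subseteq>)) vD a \<longrightarrow> EV (\<lambda>E. P \<in> eval (Up XX (\<subseteq>)) (wE E) a)))"
    using Not.IH sa by simp
  show ?case
  proof (intro conjI impI ballI)
    fix P assume p: "pos (Not a)" and P: "P \<in> XX" and nP: "P \<notin> eval (Up XX (\<subseteq>)) vD (Not a)"
    have na: "neg a" using p by auto
    obtain Q where Q: "Q \<in> XX" "P \<subseteq> Q" "Q \<in> eval (Up XX (\<subseteq>)) vD a"
      using nP mem_Not[OF upv_vD, of P a] P by blast
    have "EV (\<lambda>E. Q \<in> eval (Up XX (\<subseteq>)) (wE E) a)" using IHa na Q by blast
    then show "EV (\<lambda>E. P \<notin> eval (Up XX (\<subseteq>)) (wE E) (Not a))"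
    proof (rule EV_mono)
      fix E assume "Q \<in> eval (Up XX (\<subseteq>)) (wE E) a"
      then show "P \<notin> eval (Up XX (\<subseteq>)) (wE E) (Not a)" using mem_Not[OF upv_wE, of P E a] Q by blast
    qed
  next
    fix P assume p: "neg (Not a)" and P: "P \<in> XX" and yP: "P \<in> eval (Up XX (\<subseteq>)) vD (Not a)"
    have pa: "pos a" using p by auto
    obtain z where z: "z \<in> car B" "\<forall>Q\<in>XX. z \<notin> Q" using zlemma[OF N P] by blast
    have UUz: "UU {z} = {}" unfolding UU_def using z by blast
    show "EV (\<lambda>E. P \<in> eval (Up XX (\<subseteq>)) (wE E) (Not a))"
    proof (rule ccontr)
      assume nEV: "\<not> EV (\<lambda>E. P \<in> eval (Up XX (\<subseteq>)) (wE E) (Not a))"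
      have hyp: "\<forall>E\<in>TT. \<exists>R\<in>XX. P \<subseteq> R \<and> R \<in> eval (Up XX (\<subseteq>)) (wE E) a \<and> R \<notin> eval (Up XX (\<subseteq>)) (wE E) Bot"
      proof
        fix E assume E: "E \<in> TT"
        obtain E' where E': "E' \<in> TT" "leE E E'" "P \<notin> eval (Up XX (\<subseteq>)) (wE E') (Not a)"
          using nEV E unfolding EV_def by blast
        obtain R where R: "R \<in> XX" "P \<subseteq> R" "R \<in> eval (Up XX (\<subseteq>)) (wE E') a"
          using E'(3) mem_Not[OF upv_wE, of P E' a] P by blast
        have "R \<in> eval (Up XX (\<subseteq>)) (wE E) a" using R(3) mono_wE[OF E'(2), of a] pa by blast
        then show "\<exists>R\<in>XX. P \<subseteq> R \<and> R \<in> eval (Up XX (\<subseteq>)) (wE E) a \<and> R \<notin> eval (Up XX (\<subseteq>)) (wE E) Bot"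
          using R(1,2) by auto
      qed
      have fa: "\<forall>E\<in>TT. \<exists>C. finite C \<and> C \<subseteq> car B \<and> eval (Up XX (\<subseteq>)) (wE E) a = UU C"
        using fin_val[OF sa finv_wE] by blast
      have fb: "\<forall>E\<in>TT. \<exists>C. finite C \<and> C \<subseteq> car B \<and> eval (Up XX (\<subseteq>)) (wE E) Bot = UU C"
        using UUz z(1) by auto
      obtain R where R: "R \<in> XX" "P \<subseteq> R"
        "\<forall>E\<in>TT. R \<in> eval (Up XX (\<subseteq>)) (wE E) a \<and> R \<notin> eval (Up XX (\<subseteq>)) (wE E) Bot"
        using compact_step[OF P pa _ fa fb hyp] by auto
      have Ra: "R \<in> eval (Up XX (\<subseteq>)) vD a"
      proof (rule ccontr)
        assume "R \<notin> eval (Up XX (\<subseteq>)) vD a"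
        then have "EV (\<lambda>E. R \<notin> eval (Up XX (\<subseteq>)) (wE E) a)" using IHa pa R(1) by blast
        then obtain E where "E \<in> TT" "R \<notin> eval (Up XX (\<subseteq>)) (wE E) a" using EV_ex by blast
        then show False using R(3) by blast
      qed
      show False using yP mem_Not[OF upv_vD, of P a] R(1,2) Ra by blast
    qed
  qed
qed

end

context esak
begin

lemma ant3:
  fixes \<alpha> :: "nat fm"
  assumes "sahl_ant \<alpha>" "syms \<alpha> \<subseteq> L" "P \<in> XX" "P \<in> eval (Up XX (\<subseteq>)) vD \<alpha>"
  shows "EV (\<lambda>E. P \<in> eval (Up XX (\<subseteq>)) (wE E) \<alpha>)"
  using assms
proof (induction \<alpha> rule: sahl_ant.induct)
  case (1 x)
  have "\<forall>E'\<in>TT. leE (\<lambda>_. {}) E' \<longrightarrow> P \<in> eval (Up XX (\<subseteq>)) (wE E') (Var x)"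
    using vD_le 1(3) by auto
  then show ?case unfolding EV_def using E0 by blast
next
  case (2 \<phi>)
  then show ?case using esakia[OF 2(2)] by blast
next
  case 3
  then show ?case by simp
next
  case 4
  then show ?case by (auto intro: EV_true)
next
  case (5 a b)
  then have "EV (\<lambda>E. P \<in> eval (Up XX (\<subseteq>)) (wE E) a)" "EV (\<lambda>E. P \<in> eval (Up XX (\<subseteq>)) (wE E) b)"
    by auto
  then show ?case using EV_conj by simp
next
  case (6 a b)
  show ?case
  proof (cases "P \<in> eval (Up XX (\<subseteq>)) vD a")
    case True
    then have "EV (\<lambda>E. P \<in> eval (Up XX (\<subseteq>)) (wE E) a)" using 6 by auto
    then show ?thesis by (rule EV_mono) simp
  next
    case False
    then have "EV (\<lambda>E. P \<in> eval (Up XX (\<subseteq>)) (wE E) b)" using 6 by auto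
    then show ?thesis by (rule EV_mono) simp
  qed
qed

lemma imp3:
  fixes s :: "nat fm"
  assumes "sahl_imp s" "syms s \<subseteq> L" "P \<in> XX" "P \<notin> eval (Up XX (\<subseteq>)) vD s"
  shows "EV (\<lambda>E. P \<notin> eval (Up XX (\<subseteq>)) (wE E) s)"
  using assms
proof (induction s rule: sahl_imp.induct)
  case (1 \<phi>)
  then show ?case using esakia[OF 1(2)] by blast
next
  case (2 \<phi>)
  obtain Q where Q: "Q \<in> XX" "P \<subseteq> Q" "Q \<in> eval (Up XX (\<subseteq>)) vD \<phi>"
    using 2(4) mem_Not[OF upv_vD, of P \<phi>] 2(3) by blast
  have "EV (\<lambda>E. Q \<in> eval (Up XX (\<subseteq>)) (wE E) \<phi>)" using ant3[OF 2(1) _ Q(1,3)] 2(2) by simp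
  then show ?case
  proof (rule EV_mono)
    fix E assume "Q \<in> eval (Up XX (\<subseteq>)) (wE E) \<phi>"
    then show "P \<notin> eval (Up XX (\<subseteq>)) (wE E) (Not \<phi>)" using mem_Not[OF upv_wE, of P E \<phi>] Q by blast
  qed
next
  case (3 \<phi> \<psi>)
  have s: "syms \<phi> \<subseteq> L" "syms \<psi> \<subseteq> L" using 3(3) by auto
  obtain Q where Q: "Q \<in> XX" "P \<subseteq> Q" "Q \<in> eval (Up XX (\<subseteq>)) vD \<phi>" "Q \<notin> eval (Up XX (\<subseteq>)) vD \<psi>"
    using 3(5) mem_Impl[OF upv_vD, of P \<phi> \<psi>] 3(4) by blast
  have "EV (\<lambda>E. Q \<in> eval (Up XX (\<subseteq>)) (wE E) \<phi>)" using ant3[OF 3(1) s(1) Q(1,3)] .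
  moreover have "EV (\<lambda>E. Q \<notin> eval (Up XX (\<subseteq>)) (wE E) \<psi>)" using esakia[OF s(2)] 3(2) Q by blast
  ultimately have "EV (\<lambda>E. Q \<in> eval (Up XX (\<subseteq>)) (wE E) \<phi> \<and> Q \<notin> eval (Up XX (\<subseteq>)) (wE E) \<psi>)"
    by (rule EV_conj)
  then show ?case
  proof (rule EV_mono)
    fix E assume "Q \<in> eval (Up XX (\<subseteq>)) (wE E) \<phi> \<and> Q \<notin> eval (Up XX (\<subseteq>)) (wE E) \<psi>"
    then show "P \<notin> eval (Up XX (\<subseteq>)) (wE E) (Impl \<phi> \<psi>)" using mem_Impl[OF upv_wE, of P E \<phi> \<psi>] Q by blast
  qed
qed

lemma comb3:
  fixes s :: "nat fm"
  assumes "sahl_comb s" "syms s \<subseteq> L" "P \<in> XX" "P \<notin> eval (Up XX (\<subseteq>)) vD s"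
  shows "EV (\<lambda>E. P \<notin> eval (Up XX (\<subseteq>)) (wE E) s)"
  using assms
proof (induction s rule: sahl_comb.induct)
  case (1 \<phi>)
  then show ?case using imp3 by blast
next
  case (2 a b)
  show ?case
  proof (cases "P \<in> eval (Up XX (\<subseteq>)) vD a")
    case True
    then have "P \<notin> eval (Up XX (\<subseteq>)) vD b" using 2 by simp
    then have "EV (\<lambda>E. P \<notin> eval (Up XX (\<subseteq>)) (wE E) b)" using 2 by simp
    then show ?thesis by (rule EV_mono) simp
  next
    case False
    then have "EV (\<lambda>E. P \<notin> eval (Up XX (\<subseteq>)) (wE E) a)" using 2 by simp
    then show ?thesis by (rule EV_mono) simp
  qed
next
  case (3 a b)
  then have "EV (\<lambda>E. P \<notin> eval (Up XX (\<subseteq>)) (wE E) a)" "EV (\<lambda>E. P \<notin> eval (Up XX (\<subseteq>)) (wE E) b)"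
    by auto
  then show ?case using EV_conj by simp
qed

lemma list3:
  fixes phis :: "nat fm list"
  assumes "\<forall>\<phi>\<in>set phis. sahl_comb \<phi> \<and> syms \<phi> \<subseteq> L" "P \<in> XX" "\<forall>\<phi>\<in>set phis. P \<notin> eval (Up XX (\<subseteq>)) vD \<phi>"
  shows "EV (\<lambda>E. \<forall>\<phi>\<in>set phis. P \<notin> eval (Up XX (\<subseteq>)) (wE E) \<phi>)"
  using assms
proof (induction phis)
  case Nil
  then show ?case by (auto intro: EV_true)
next
  case (Cons a phis)
  have "EV (\<lambda>E. P \<notin> eval (Up XX (\<subseteq>)) (wE E) a)" using comb3 Cons.prems by simp
  moreover have "EV (\<lambda>E. \<forall>\<phi>\<in>set phis. P \<notin> eval (Up XX (\<subseteq>)) (wE E) \<phi>)" using Cons by simp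
  ultimately show ?case using EV_conj by simp
qed

end

context sett
begin

definition below where
  "below W v u \<longleftrightarrow> upv XX u \<and> (\<forall>n. u n \<subseteq> v n) \<and> (\<forall>p\<in>W. snd p \<in> u (fst p))"

definition witok where
  "witok v W \<longleftrightarrow> finite W \<and> (\<forall>p\<in>W. snd p \<in> v (fst p))"

lemma below_sub: "below W v u \<Longrightarrow> W' \<subseteq> W \<Longrightarrow> below W' v u"
  unfolding below_def by blast

lemma witok_Un: "witok v W1 \<Longrightarrow> witok v W2 \<Longrightarrow> witok v (W1 \<union> W2)"
  unfolding witok_def by blast

lemma ant1:
  fixes \<alpha> :: "nat fm"
  assumes "sahl_ant \<alpha>" "upv XX v" "P \<in> eval (Up XX (\<subseteq>)) v \<alpha>"
  shows "\<exists>W. witok v W \<and> (\<forall>u. below W v u \<longrightarrow> P \<in> eval (Up XX (\<subseteq>)) u \<alpha>)"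
  using assms
proof (induction \<alpha> rule: sahl_ant.induct)
  case (1 x)
  have "witok v {(x, P)}" unfolding witok_def using 1 by simp
  moreover have "\<forall>u. below {(x, P)} v u \<longrightarrow> P \<in> eval (Up XX (\<subseteq>)) u (Var x)"
    unfolding below_def by simp
  ultimately show ?case by blast
next
  case (2 \<phi>)
  have "witok v {}" unfolding witok_def by simp
  moreover have "\<forall>u. below {} v u \<longrightarrow> P \<in> eval (Up XX (\<subseteq>)) u \<phi>"
  proof (intro allI impI)
    fix u assume "below {} v u"
    then have u: "upv XX u" "\<forall>n. u n \<subseteq> v n" unfolding below_def by auto
    show "P \<in> eval (Up XX (\<subseteq>)) u \<phi>" using mono_ev[OF u(1) 2(2) u(2), of \<phi>] 2(1,3) by blast
  qed
  ultimately show ?case by blast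
next
  case 3
  then show ?case by simp
next
  case 4
  have "witok v {}" unfolding witok_def by simp
  moreover have "\<forall>u. below {} v u \<longrightarrow> P \<in> eval (Up XX (\<subseteq>)) u Top" using 4 by simp
  ultimately show ?case by blast
next
  case (5 a b)
  obtain W1 where W1: "witok v W1" "\<forall>u. below W1 v u \<longrightarrow> P \<in> eval (Up XX (\<subseteq>)) u a" using 5 by auto
  obtain W2 where W2: "witok v W2" "\<forall>u. below W2 v u \<longrightarrow> P \<in> eval (Up XX (\<subseteq>)) u b" using 5 by auto
  have "\<forall>u. below (W1 \<union> W2) v u \<longrightarrow> P \<in> eval (Up XX (\<subseteq>)) u (And a b)"
    using W1(2) W2(2) below_sub by (metis Un_upper1 Un_upper2 ev_simps(4) IntI)
  then show ?case using witok_Un[OF W1(1) W2(1)] by blast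
next
  case (6 a b)
  show ?case
  proof (cases "P \<in> eval (Up XX (\<subseteq>)) v a")
    case True
    then obtain W1 where W1: "witok v W1" "\<forall>u. below W1 v u \<longrightarrow> P \<in> eval (Up XX (\<subseteq>)) u a" using 6 by auto
    then show ?thesis by auto
  next
    case False
    then have "P \<in> eval (Up XX (\<subseteq>)) v b" using 6 by simp
    then obtain W1 where W1: "witok v W1" "\<forall>u. below W1 v u \<longrightarrow> P \<in> eval (Up XX (\<subseteq>)) u b" using 6 by auto
    then show ?thesis by auto
  qed
qed

lemma imp1:
  fixes s :: "nat fm"
  assumes "sahl_imp s" "upv XX v" "P \<in> XX" "P \<notin> eval (Up XX (\<subseteq>)) v s"
  shows "\<exists>W. witok v W \<and> (\<forall>u. below W v u \<longrightarrow> P \<notin> eval (Up XX (\<subseteq>)) u s)"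
  using assms
proof (induction s rule: sahl_imp.induct)
  case (1 \<phi>)
  have "witok v {}" unfolding witok_def by simp
  moreover have "\<forall>u. below {} v u \<longrightarrow> P \<notin> eval (Up XX (\<subseteq>)) u \<phi>"
  proof (intro allI impI)
    fix u assume "below {} v u"
    then have u: "upv XX u" "\<forall>n. u n \<subseteq> v n" unfolding below_def by auto
    show "P \<notin> eval (Up XX (\<subseteq>)) u \<phi>" using mono_ev[OF u(1) 1(2) u(2), of \<phi>] 1(1,4) by blast
  qed
  ultimately show ?case by blast
next
  case (2 \<phi>)
  obtain Q where Q: "Q \<in> XX" "P \<subseteq> Q" "Q \<in> eval (Up XX (\<subseteq>)) v \<phi>"
    using 2(4) mem_Not[OF 2(2), of P \<phi>] 2(3) by blast
  obtain W where W: "witok v W" "\<forall>u. below W v u \<longrightarrow> Q \<in> eval (Up XX (\<subseteq>)) u \<phi>"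
    using ant1[OF 2(1) 2(2) Q(3)] by blast
  have "\<forall>u. below W v u \<longrightarrow> P \<notin> eval (Up XX (\<subseteq>)) u (Not \<phi>)"
  proof (intro allI impI)
    fix u assume bu: "below W v u"
    then have u: "upv XX u" unfolding below_def by auto
    show "P \<notin> eval (Up XX (\<subseteq>)) u (Not \<phi>)" using mem_Not[OF u, of P \<phi>] W(2) bu Q by blast
  qed
  then show ?case using W(1) by blast
next
  case (3 \<phi> \<psi>)
  obtain Q where Q: "Q \<in> XX" "P \<subseteq> Q" "Q \<in> eval (Up XX (\<subseteq>)) v \<phi>" "Q \<notin> eval (Up XX (\<subseteq>)) v \<psi>"
    using 3(5) mem_Impl[OF 3(3), of P \<phi> \<psi>] 3(4) by blast
  obtain W where W: "witok v W" "\<forall>u. below W v u \<longrightarrow> Q \<in> eval (Up XX (\<subseteq>)) u \<phi>"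
    using ant1[OF 3(1) 3(3) Q(3)] by blast
  have "\<forall>u. below W v u \<longrightarrow> P \<notin> eval (Up XX (\<subseteq>)) u (Impl \<phi> \<psi>)"
  proof (intro allI impI)
    fix u assume bu: "below W v u"
    then have u: "upv XX u" "\<forall>n. u n \<subseteq> v n" unfolding below_def by auto
    have "Q \<notin> eval (Up XX (\<subseteq>)) u \<psi>" using mono_ev[OF u(1) 3(3) u(2), of \<psi>] 3(2) Q(4) by blast
    then show "P \<notin> eval (Up XX (\<subseteq>)) u (Impl \<phi> \<psi>)" using mem_Impl[OF u(1), of P \<phi> \<psi>] W(2) bu Q by blast
  qed
  then show ?case using W(1) by blast
qed

lemma comb1:
  fixes s :: "nat fm"
  assumes "sahl_comb s" "upv XX v" "P \<in> XX" "P \<notin> eval (Up XX (\<subseteq>)) v s"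
  shows "\<exists>W. witok v W \<and> (\<forall>u. below W v u \<longrightarrow> P \<notin> eval (Up XX (\<subseteq>)) u s)"
  using assms
proof (induction s rule: sahl_comb.induct)
  case (1 \<phi>)
  then show ?case using imp1 by blast
next
  case (2 a b)
  show ?case
  proof (cases "P \<in> eval (Up XX (\<subseteq>)) v a")
    case True
    then have "P \<notin> eval (Up XX (\<subseteq>)) v b" using 2 by simp
    then obtain W where "witok v W" "\<forall>u. below W v u \<longrightarrow> P \<notin> eval (Up XX (\<subseteq>)) u b" using 2 by auto
    then show ?thesis by auto
  next
    case False
    then obtain W where "witok v W" "\<forall>u. below W v u \<longrightarrow> P \<notin> eval (Up XX (\<subseteq>)) u a" using 2 by auto
    then show ?thesis by auto
  qed
next
  case (3 a b)
  obtain W1 where W1: "witok v W1" "\<forall>u. below W1 v u \<longrightarrow> P \<notin> eval (Up XX (\<subseteq>)) u a" using 3 by auto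
  obtain W2 where W2: "witok v W2" "\<forall>u. below W2 v u \<longrightarrow> P \<notin> eval (Up XX (\<subseteq>)) u b" using 3 by auto
  have "\<forall>u. below (W1 \<union> W2) v u \<longrightarrow> P \<notin> eval (Up XX (\<subseteq>)) u (Or a b)"
  proof (intro allI impI)
    fix u assume "below (W1 \<union> W2) v u"
    then have "below W1 v u" "below W2 v u" using below_sub by blast+
    then show "P \<notin> eval (Up XX (\<subseteq>)) u (Or a b)" using W1(2) W2(2) by simp
  qed
  then show ?case using witok_Un[OF W1(1) W2(1)] by blast
qed

lemma list1:
  fixes phis :: "nat fm list"
  assumes "\<forall>\<phi>\<in>set phis. sahl_comb \<phi>" "upv XX v" "P \<in> XX" "\<forall>\<phi>\<in>set phis. P \<notin> eval (Up XX (\<subseteq>)) v \<phi>"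
  shows "\<exists>W. witok v W \<and> (\<forall>u. below W v u \<longrightarrow> (\<forall>\<phi>\<in>set phis. P \<notin> eval (Up XX (\<subseteq>)) u \<phi>))"
  using assms
proof (induction phis)
  case Nil
  have "witok v {}" unfolding witok_def by simp
  then show ?case by auto
next
  case (Cons a phis)
  have ca: "sahl_comb a" "P \<notin> eval (Up XX (\<subseteq>)) v a" using Cons.prems by auto
  obtain W1 where W1: "witok v W1" "\<forall>u. below W1 v u \<longrightarrow> P \<notin> eval (Up XX (\<subseteq>)) u a"
    using comb1[OF ca(1) Cons.prems(2,3) ca(2)] by blast
  obtain W2 where W2: "witok v W2" "\<forall>u. below W2 v u \<longrightarrow> (\<forall>\<phi>\<in>set phis. P \<notin> eval (Up XX (\<subseteq>)) u \<phi>)"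
    using Cons by auto
  have "\<forall>u. below (W1 \<union> W2) v u \<longrightarrow> (\<forall>\<phi>\<in>set (a # phis). P \<notin> eval (Up XX (\<subseteq>)) u \<phi>)"
  proof (intro allI impI)
    fix u assume "below (W1 \<union> W2) v u"
    then have "below W1 v u" "below W2 v u" using below_sub by blast+
    then show "\<forall>\<phi>\<in>set (a # phis). P \<notin> eval (Up XX (\<subseteq>)) u \<phi>" using W1(2) W2(2) by simp
  qed
  then show ?case using witok_Un[OF W1(1) W2(1)] by blast
qed

lemma step1:
  fixes phis :: "nat fm list"
  assumes "\<forall>\<phi>\<in>set phis. sahl_comb \<phi>" "upv XX v" "F \<in> XX" "\<forall>\<phi>\<in>set phis. F \<notin> eval (Up XX (\<subseteq>)) v \<phi>"
  shows "\<exists>D. (\<forall>m. D m \<subseteq> car B) \<and> (\<forall>\<phi>\<in>set phis. F \<notin> eval (Up XX (\<subseteq>)) (\<lambda>m. UU (D m)) \<phi>)"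
proof -
  obtain W where W: "witok v W" "\<forall>u. below W v u \<longrightarrow> (\<forall>\<phi>\<in>set phis. F \<notin> eval (Up XX (\<subseteq>)) u \<phi>)"
    using list1[OF assms] by blast
  define D where "D m = car B \<inter> \<Inter>{Q. (m, Q) \<in> W}" for m
  have Dc: "\<forall>m. D m \<subseteq> car B" unfolding D_def by blast
  have finW: "finite W" and Wv: "\<forall>p\<in>W. snd p \<in> v (fst p)" using W(1) unfolding witok_def by auto
  have vX: "v m \<subseteq> XX" for m using assms(2) unfolding upv_def is_upset_def by blast
  have "below W v (\<lambda>m. UU (D m))"
    unfolding below_def
  proof (intro conjI allI ballI)
    show "upv XX (\<lambda>m. UU (D m))" unfolding upv_def using UU_up by blast
  next
    fix m
    show "UU (D m) \<subseteq> v m"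
    proof
      fix R assume R: "R \<in> UU (D m)"
      then have RX: "R \<in> XX" and DR: "D m \<subseteq> R" unfolding UU_def by auto
      define Wm where "Wm = {Q. (m, Q) \<in> W}"
      have "Wm = snd ` (W \<inter> {p. fst p = m})" unfolding Wm_def by force
      then have finm: "finite Wm" using finW by simp
      have WmX: "Wm \<subseteq> XX" unfolding Wm_def using Wv vX by fastforce
      have "car B \<inter> \<Inter>Wm \<subseteq> R" using DR unfolding D_def Wm_def by simp
      then obtain Q where Q: "Q \<in> Wm" "Q \<subseteq> R" using dlemma[OF finm WmX RX] by blast
      have "Q \<in> v m" using Q(1) Wv unfolding Wm_def by force
      then show "R \<in> v m" using assms(2) Q(2) RX unfolding upv_def is_upset_def by blast
    qed
  next
    fix p assume p: "p \<in> W"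
    have "snd p \<in> XX" using Wv p vX by blast
    moreover have "D (fst p) \<subseteq> snd p" unfolding D_def using p by (cases p) auto
    ultimately show "snd p \<in> UU (D (fst p))" unfolding UU_def by blast
  qed
  then show ?thesis using W(2) Dc by blast
qed

lemma core1:
  fixes phis :: "nat fm list"
  assumes "\<forall>\<phi>\<in>set phis. sahl_comb \<phi> \<and> syms \<phi> \<subseteq> L" "upv XX v" "F \<in> XX"
    "\<forall>\<phi>\<in>set phis. F \<notin> eval (Up XX (\<subseteq>)) v \<phi>"
  shows "\<exists>E. (\<forall>m. finite (E m) \<and> E m \<subseteq> car B) \<and> finite {m. E m \<noteq> {}} \<and>
     (\<forall>\<phi>\<in>set phis. F \<notin> eval (Up XX (\<subseteq>)) (\<lambda>m. UU (E m)) \<phi>)"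
proof -
  obtain D where D: "\<forall>m. D m \<subseteq> car B" "\<forall>\<phi>\<in>set phis. F \<notin> eval (Up XX (\<subseteq>)) (\<lambda>m. UU (D m)) \<phi>"
    using step1[of phis v F] assms by blast
  interpret es: esak L H S B D
    by (unfold_locales) (use D(1) in blast)
  have "es.EV (\<lambda>E. \<forall>\<phi>\<in>set phis. F \<notin> eval (Up XX (\<subseteq>)) (es.wE E) \<phi>)"
    using es.list3[OF assms(1) assms(3)] D(2) unfolding es.vD_def by simp
  then obtain E where E: "E \<in> es.TT" "\<forall>\<phi>\<in>set phis. F \<notin> eval (Up XX (\<subseteq>)) (es.wE E) \<phi>"
    using es.EV_ex by blast
  have "(\<forall>m. finite (E m) \<and> E m \<subseteq> car B) \<and> finite {m. E m \<noteq> {}}"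
    using E(1) D(1) unfolding es.TT_def by blast
  moreover have "es.wE E = (\<lambda>m. UU (E m))" unfolding es.wE_def by simp
  ultimately show ?thesis using E(2) by auto
qed

end

fun trT :: "bool \<Rightarrow> (nat \<times> nat) option fm \<Rightarrow> nat fm" where
  "trT z (Var x) = Var (to_nat x)"
| "trT z Top = Top"
| "trT z Bot = Bot"
| "trT z (And a b) = And (trT z a) (trT z b)"
| "trT z (Or a b) = Or (trT z a) (trT z b)"
| "trT z (Impl a b) = (if b = Bot \<and> \<not> z then Not (trT z a) else Impl (trT z a) (trT z b))"
| "trT z (Not a) = Not (trT z a)"

lemma trT_Up: "eval (Up X le) w (trT z \<phi>) = eval (Up X le) (\<lambda>x. w (to_nat x)) \<phi>"
  by (induction \<phi>) auto

lemma trT_H: assumes hH: "heyting H" and w: "\<forall>n. w n \<in> car H"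
  shows "eval H w (trT z \<phi>) = eval H (\<lambda>x. w (to_nat x)) \<phi>"
proof (induction \<phi>)
  case (Impl a b)
  have wc: "\<forall>x. (\<lambda>x. w (to_nat x)) x \<in> car H" using w by simp
  show ?case
  proof (cases "b = Bot \<and> \<not> z")
    case True
    then show ?thesis using Impl hneg[OF hH eval_closedH[OF hH wc, of a]] by simp
  next
    case False
    then show ?thesis using Impl by auto
  qed
qed auto

fun goodL :: "opsym set \<Rightarrow> 'v fm \<Rightarrow> bool" where
  "goodL L (Var x) = True"
| "goodL L Top = (One \<in> L)"
| "goodL L Bot = (Zero \<in> L)"
| "goodL L (And a b) = (Meet \<in> L \<and> goodL L a \<and> goodL L b)"
| "goodL L (Or a b) = (Join \<in> L \<and> goodL L a \<and> goodL L b)"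
| "goodL L (Impl a b) = (goodL L a \<and> (if b = Bot then (Zero \<in> L \<or> Neg \<in> L) else goodL L b))"
| "goodL L (Not a) = (Neg \<in> L \<and> goodL L a)"

lemma trT_syms: "Imp \<in> L \<Longrightarrow> goodL L \<phi> \<Longrightarrow> syms (trT (Zero \<in> L) \<phi>) \<subseteq> L"
proof (induction \<phi>)
  case (Impl a b)
  show ?case
  proof (cases "b = Bot")
    case True
    then show ?thesis using Impl by (cases "Zero \<in> L") auto
  next
    case False
    then show ?thesis using Impl by auto
  qed
qed auto

lemma goodL_imps:
  "(\<forall>g\<in>set gs. goodL L g) \<Longrightarrow> (goodL L c \<or> (gs \<noteq> [] \<and> c = Bot \<and> (Zero \<in> L \<or> Neg \<in> L))) \<Longrightarrow> goodL L (imps gs c)"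
proof (induction gs)
  case Nil
  then show ?case by simp
next
  case (Cons g gs)
  show ?case
  proof (cases gs)
    case Nil
    then show ?thesis using Cons.prems by auto
  next
    case (Cons g' gs')
    then have "imps gs c \<noteq> Bot" by simp
    moreover have "goodL L (imps gs c)" using Cons.IH Cons.prems \<open>gs = g' # gs'\<close> by auto
    ultimately show ?thesis using Cons.prems by simp
  qed
qed

lemma bold_ne: "k \<ge> 1 \<Longrightarrow> bold k \<phi> \<noteq> []"
  by (induction \<phi>) (auto simp: concat_eq_Nil_conv)

lemma bold_good: "k \<ge> 1 \<Longrightarrow> syms \<phi> \<subseteq> L \<Longrightarrow> \<forall>\<psi>\<in>set (bold k \<phi>). goodL L \<psi>"
proof (induction \<phi>)
  case (Impl a b)
  have ga: "\<forall>g\<in>set (bold k a). goodL L g" and gb: "\<forall>g\<in>set (bold k b). goodL L g" using Impl by auto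
  show ?case
  proof
    fix \<psi> assume "\<psi> \<in> set (bold k (Impl a b))"
    then obtain c where c: "c \<in> set (bold k b)" "\<psi> = imps (bold k a) c" by auto
    show "goodL L \<psi>" unfolding c(2) using goodL_imps[OF ga] gb c(1) by blast
  qed
next
  case (Not a)
  have ga: "\<forall>g\<in>set (bold k a). goodL L g" using Not by auto
  have ne: "bold k a \<noteq> []" using bold_ne Not.prems(1) by blast
  have N: "Neg \<in> L" using Not.prems by auto
  show ?case using goodL_imps[OF ga] ne N by simp
qed auto

fun someV :: "(nat \<times> nat) option fm \<Rightarrow> bool" where
  "someV (Var x) = (x \<noteq> None)"
| "someV Top = True"
| "someV Bot = True"
| "someV (And a b) = (someV a \<and> someV b)"
| "someV (Or a b) = (someV a \<and> someV b)"
| "someV (Impl a b) = (someV a \<and> someV b)"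
| "someV (Not a) = someV a"

lemma someV_imps: "(\<forall>g\<in>set gs. someV g) \<Longrightarrow> someV c \<Longrightarrow> someV (imps gs c)"
  by (induction gs) auto

lemma bold_someV: "\<forall>\<psi>\<in>set (bold k \<phi>). someV \<psi>"
  by (induction \<phi>) (auto simp: someV_imps)

lemma eval_someV: "someV \<psi> \<Longrightarrow> (\<forall>x. v (Some x) = v' (Some x)) \<Longrightarrow> eval A v \<psi> = eval A v' \<psi>"
proof (induction \<psi>)
  case (Var x)
  then show ?case by (cases x) auto
qed auto

definition capL :: "'x set set \<Rightarrow> 'x set set list \<Rightarrow> 'x set set" where
  "capL X Vs = {x \<in> X. \<forall>V\<in>set Vs. x \<in> V}"

lemma imps_sem: assumes u: "upv X u"
  shows "eval (Up X (\<subseteq>)) u (imps gs c) = {x \<in> X. \<forall>Q\<in>X. x \<subseteq> Q \<longrightarrow> Q \<in> capL X (map (eval (Up X (\<subseteq>)) u) gs) \<longrightarrow> Q \<in> eval (Up X (\<subseteq>)) u c}"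
proof (induction gs)
  case Nil
  have "is_upset X (\<subseteq>) (eval (Up X (\<subseteq>)) u c)" using ev_up[OF u] .
  then show ?case unfolding capL_def is_upset_def by auto
next
  case (Cons g gs)
  show ?case
  proof (rule set_eqI)
    fix x
    have "x \<in> eval (Up X (\<subseteq>)) u (imps (g # gs) c) \<longleftrightarrow>
      x \<in> X \<and> (\<forall>Q\<in>X. x \<subseteq> Q \<longrightarrow> Q \<in> eval (Up X (\<subseteq>)) u g \<longrightarrow> Q \<in> eval (Up X (\<subseteq>)) u (imps gs c))"
      using mem_Impl[OF u, of x g "imps gs c"] by simp
    also have "\<dots> \<longleftrightarrow> x \<in> X \<and> (\<forall>Q\<in>X. x \<subseteq> Q \<longrightarrow> Q \<in> capL X (map (eval (Up X (\<subseteq>)) u) (g # gs)) \<longrightarrow> Q \<in> eval (Up X (\<subseteq>)) u c)"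
      unfolding Cons.IH capL_def
      using ev_up[OF u, of g] unfolding is_upset_def by (auto dest: subset_trans)
    finally show "x \<in> eval (Up X (\<subseteq>)) u (imps (g # gs) c) \<longleftrightarrow>
      x \<in> {x \<in> X. \<forall>Q\<in>X. x \<subseteq> Q \<longrightarrow> Q \<in> capL X (map (eval (Up X (\<subseteq>)) u) (g # gs)) \<longrightarrow> Q \<in> eval (Up X (\<subseteq>)) u c}"
      by simp
  qed
qed

definition wk :: "'x set set \<Rightarrow> nat \<Rightarrow> ((nat \<times> nat) option \<Rightarrow> 'x set set) \<Rightarrow> nat \<Rightarrow> 'x set set" where
  "wk X k u m = {x \<in> X. \<forall>j\<in>{1..k}. x \<in> u (Some (m, j))}"

lemma upv_wk: "upv X u \<Longrightarrow> upv X (wk X k u)"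
  unfolding upv_def wk_def is_upset_def by blast

lemma bold_sem: assumes k: "k \<ge> 1" and u: "upv X u"
  shows "capL X (map (eval (Up X (\<subseteq>)) u) (bold k \<phi>)) = eval (Up X (\<subseteq>)) (wk X k u) \<phi>"
proof (induction \<phi>)
  case (Var m)
  have "set [1..<Suc k] = {1..k}" by auto
  then show ?case unfolding capL_def wk_def by auto
next
  case Top
  show ?case unfolding capL_def by (auto simp: downset_def)
next
  case Bot
  have "eval (Up X (\<subseteq>)) u (Var (Some (1,1))) \<subseteq> X" using ev_sub[OF u] .
  then show ?case unfolding capL_def by (auto simp: downset_def)
next
  case (And a b)
  then show ?case unfolding capL_def by auto
next
  case (Or a b)
  have sa: "capL X (map (eval (Up X (\<subseteq>)) u) (bold k a)) \<subseteq> X" and sb: "capL X (map (eval (Up X (\<subseteq>)) u) (bold k b)) \<subseteq> X"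
    unfolding capL_def by auto
  have "capL X (map (eval (Up X (\<subseteq>)) u) (bold k (Or a b))) =
      capL X (map (eval (Up X (\<subseteq>)) u) (bold k a)) \<union> capL X (map (eval (Up X (\<subseteq>)) u) (bold k b))"
    unfolding capL_def by auto
  then show ?case using Or by simp
next
  case (Impl a b)
  have wu: "upv X (wk X k u)" using upv_wk[OF u] .
  show ?case
  proof (rule set_eqI)
    fix x
    have "x \<in> capL X (map (eval (Up X (\<subseteq>)) u) (bold k (Impl a b))) \<longleftrightarrow>
       x \<in> X \<and> (\<forall>c\<in>set (bold k b). \<forall>Q\<in>X. x \<subseteq> Q \<longrightarrow> Q \<in> capL X (map (eval (Up X (\<subseteq>)) u) (bold k a)) \<longrightarrow> Q \<in> eval (Up X (\<subseteq>)) u c)"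
      unfolding capL_def by (auto simp: imps_sem[OF u] capL_def)
    also have "\<dots> \<longleftrightarrow> x \<in> X \<and> (\<forall>Q\<in>X. x \<subseteq> Q \<longrightarrow> Q \<in> eval (Up X (\<subseteq>)) (wk X k u) a \<longrightarrow> Q \<in> capL X (map (eval (Up X (\<subseteq>)) u) (bold k b)))"
      unfolding Impl.IH(1)[symmetric] unfolding capL_def by auto
    also have "\<dots> \<longleftrightarrow> x \<in> eval (Up X (\<subseteq>)) (wk X k u) (Impl a b)"
      unfolding Impl.IH(2) using mem_Impl[OF wu, of x a b] by simp
    finally show "x \<in> capL X (map (eval (Up X (\<subseteq>)) u) (bold k (Impl a b))) \<longleftrightarrow> x \<in> eval (Up X (\<subseteq>)) (wk X k u) (Impl a b)" .
  qed
next
  case (Not a)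
  have wu: "upv X (wk X k u)" using upv_wk[OF u] .
  show ?case
  proof (rule set_eqI)
    fix x
    have "x \<in> capL X (map (eval (Up X (\<subseteq>)) u) (bold k (Not a))) \<longleftrightarrow>
       x \<in> X \<and> (\<forall>Q\<in>X. x \<subseteq> Q \<longrightarrow> Q \<in> capL X (map (eval (Up X (\<subseteq>)) u) (bold k a)) \<longrightarrow> Q \<in> {})"
      unfolding capL_def by (auto simp: imps_sem[OF u] capL_def)
    also have "\<dots> \<longleftrightarrow> x \<in> eval (Up X (\<subseteq>)) (wk X k u) (Not a)"
      unfolding Not.IH using mem_Not[OF wu, of x a] by simp
    finally show "x \<in> capL X (map (eval (Up X (\<subseteq>)) u) (bold k (Not a))) \<longleftrightarrow> x \<in> eval (Up X (\<subseteq>)) (wk X k u) (Not a)" .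
  qed
qed

lemma Up_sat_iff:
  fixes phis :: "nat fm list" and X :: "'x set set"
  shows "Up_sat X (\<subseteq>) phis \<longleftrightarrow> (\<forall>v :: nat \<Rightarrow> 'x set set. upv X v \<longrightarrow> (\<forall>F\<in>X. \<exists>\<phi>\<in>set phis. F \<in> eval (Up X (\<subseteq>)) v \<phi>))"
proof
  assume A: "Up_sat X (\<subseteq>) phis"
  show "\<forall>v :: nat \<Rightarrow> 'x set set. upv X v \<longrightarrow> (\<forall>F\<in>X. \<exists>\<phi>\<in>set phis. F \<in> eval (Up X (\<subseteq>)) v \<phi>)"
  proof (intro allI impI ballI)
    fix v :: "nat \<Rightarrow> 'x set set" and F assume v: "upv X v" and F: "F \<in> X"
    show "\<exists>\<phi>\<in>set phis. F \<in> eval (Up X (\<subseteq>)) v \<phi>"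
    proof (rule ccontr)
      assume nF: "\<not> (\<exists>\<phi>\<in>set phis. F \<in> eval (Up X (\<subseteq>)) v \<phi>)"
      define Y where "Y = {x \<in> X. F \<subseteq> x}"
      define Z where "Z = Y - {F}"
      have uY: "is_upset X (\<subseteq>) Y" unfolding Y_def is_upset_def by auto
      have uZ: "is_upset X (\<subseteq>) Z" unfolding Z_def Y_def is_upset_def by auto
      have "\<forall>\<phi>\<in>set phis. eval (Up X (\<subseteq>)) v \<phi> \<inter> Y \<subseteq> Z" using nF unfolding Z_def by blast
      then have "Y \<subseteq> Z" using A v uY uZ unfolding Up_sat_def upv_def by blast
      moreover have "F \<in> Y" unfolding Y_def using F by blast
      ultimately show False unfolding Z_def by blast
    qed
  qed
next
  assume A: "\<forall>v :: nat \<Rightarrow> 'x set set. upv X v \<longrightarrow> (\<forall>F\<in>X. \<exists>\<phi>\<in>set phis. F \<in> eval (Up X (\<subseteq>)) v \<phi>)"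
  show "Up_sat X (\<subseteq>) phis" unfolding Up_sat_def
  proof (intro allI impI subsetI)
    fix v :: "nat \<Rightarrow> 'x set set" and Y Z y
    assume v: "\<forall>n. is_upset X (\<subseteq>) (v n)" and uY: "is_upset X (\<subseteq>) Y" and uZ: "is_upset X (\<subseteq>) Z"
      and sub: "\<forall>\<phi>\<in>set phis. eval (Up X (\<subseteq>)) v \<phi> \<inter> Y \<subseteq> Z" and y: "y \<in> Y"
    have "y \<in> X" using uY y unfolding is_upset_def by blast
    then obtain \<phi> where "\<phi> \<in> set phis" "y \<in> eval (Up X (\<subseteq>)) v \<phi>" using A v unfolding upv_def by blast
    then show "y \<in> Z" using sub y by blast
  qed
qed

definition fk :: "nat \<Rightarrow> nat fm list \<Rightarrow> (nat \<times> nat) option fm" where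
  "fk k phis = imps (map (\<lambda>\<phi>. imps (bold k \<phi>) (Var None)) phis) (Var None)"

lemma A_Phi_fk: "A_Phi phis = {fk k phis | k. k \<ge> 1}"
  unfolding A_Phi_def fk_def by simp

lemma fk_good: "k \<ge> 1 \<Longrightarrow> \<forall>\<phi>\<in>set phis. syms \<phi> \<subseteq> L \<Longrightarrow> goodL L (fk k phis)"
  unfolding fk_def
  by (rule goodL_imps) (auto intro!: goodL_imps simp: bold_good)

lemma fk_valid_Up:
  fixes phis :: "nat fm list" and X :: "'x set set"
  assumes k: "k \<ge> 1" and P: "\<forall>v :: nat \<Rightarrow> 'x set set. upv X v \<longrightarrow> (\<forall>F\<in>X. \<exists>\<phi>\<in>set phis. F \<in> eval (Up X (\<subseteq>)) v \<phi>)"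
    and u: "upv X u"
  shows "eval (Up X (\<subseteq>)) u (fk k phis) = X"
proof -
  have "\<forall>x\<in>X. x \<in> eval (Up X (\<subseteq>)) u (fk k phis)"
  proof
    fix x assume x: "x \<in> X"
    have "\<forall>Q\<in>X. x \<subseteq> Q \<longrightarrow> Q \<in> capL X (map (eval (Up X (\<subseteq>)) u) (map (\<lambda>\<phi>. imps (bold k \<phi>) (Var None)) phis)) \<longrightarrow>
        Q \<in> eval (Up X (\<subseteq>)) u (Var None)"
    proof (intro ballI impI)
      fix Q assume Q: "Q \<in> X" "x \<subseteq> Q"
        and QC: "Q \<in> capL X (map (eval (Up X (\<subseteq>)) u) (map (\<lambda>\<phi>. imps (bold k \<phi>) (Var None)) phis))"
      obtain \<phi> where \<phi>: "\<phi> \<in> set phis" "Q \<in> eval (Up X (\<subseteq>)) (wk X k u) \<phi>"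
        using P upv_wk[OF u] Q(1) by blast
      have "Q \<in> capL X (map (eval (Up X (\<subseteq>)) u) (bold k \<phi>))" using \<phi>(2) bold_sem[OF k u] by simp
      moreover have "Q \<in> eval (Up X (\<subseteq>)) u (imps (bold k \<phi>) (Var None))" using QC \<phi>(1) unfolding capL_def by simp
      ultimately show "Q \<in> eval (Up X (\<subseteq>)) u (Var None)" using imps_sem[OF u] Q(1) by blast
    qed
    then show "x \<in> eval (Up X (\<subseteq>)) u (fk k phis)" unfolding fk_def imps_sem[OF u] using x by blast
  qed
  then show ?thesis using ev_sub[OF u] by blast
qed


context sett
begin

lemma eqBS:
  fixes s t :: "nat fm"
  assumes "syms s \<subseteq> L" "syms t \<subseteq> L"
    and "\<And>v. (\<forall>x. v x \<in> S) \<Longrightarrow> eval H v s = eval H v t"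
    and "\<forall>x. w x \<in> car B"
  shows "eval B w s = eval B w t"
proof -
  have "\<forall>v. (\<forall>x. v x \<in> S) \<longrightarrow> eval H v s = eval H v t" using assms(3) by blast
  moreover have "\<forall>s t :: nat fm. syms s \<subseteq> L \<longrightarrow> syms t \<subseteq> L \<longrightarrow>
        (\<forall>v. (\<forall>x. v x \<in> S) \<longrightarrow> eval H v s = eval H v t) \<longrightarrow>
        (\<forall>w. (\<forall>x. w x \<in> car B) \<longrightarrow> eval B w s = eval B w t)"
    using var unfolding variety_def by blast
  ultimately show ?thesis using assms(1,2,4) by blast
qed

definition tt :: "nat fm" where "tt = (if One \<in> L then Top else Impl (Var 0) (Var 0))"

lemma tt_syms: "syms tt \<subseteq> L"
  unfolding tt_def using imp by auto

lemma tt_H: assumes v: "\<forall>x. v x \<in> car H" shows "eval H v tt = tp H"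
  unfolding tt_def using H1[OF hH] v by simp

lemma tt_B: assumes w: "\<forall>x. w x \<in> car B" shows "eval B w tt = one"
proof -
  have w0: "w 0 \<in> car B" using w by blast
  show ?thesis
  proof (cases "One \<in> L")
    case True
    then show ?thesis unfolding tt_def using B10[OF True w0] one_eq[OF w0] by simp
  next
    case False
    then show ?thesis unfolding tt_def using one_eq[OF w0] by simp
  qed
qed

lemma transfer:
  assumes k: "k \<ge> 1" and sq: "\<forall>\<phi>\<in>set phis. syms \<phi> \<subseteq> L" and val: "valid_in H S (fk k phis)"
    and w: "\<forall>x. w x \<in> car B"
  shows "eval B w (trT (Zero \<in> L) (fk k phis)) = one"
proof -
  have s1: "syms (trT (Zero \<in> L) (fk k phis)) \<subseteq> L" using trT_syms[OF imp fk_good[OF k sq]] .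
  have "eval B w (trT (Zero \<in> L) (fk k phis)) = eval B w tt"
  proof (rule eqBS[OF s1 tt_syms _ w])
    fix v :: "nat \<Rightarrow> 'a" assume v: "\<forall>x. v x \<in> S"
    have vH: "\<forall>x. v x \<in> car H" using v SH by blast
    have "eval H v (trT (Zero \<in> L) (fk k phis)) = eval H (\<lambda>x. v (to_nat x)) (fk k phis)"
      using trT_H[OF hH vH] .
    also have "\<dots> = tp H"
    proof -
      have "\<forall>x. (\<lambda>x. v (to_nat x)) x \<in> S" using v by simp
      then show ?thesis using val[unfolded valid_in_def, rule_format, of "\<lambda>x. v (to_nat x)"] by blast
    qed
    finally show "eval H v (trT (Zero \<in> L) (fk k phis)) = eval H v tt" using tt_H[OF vH] by simp
  qed
  then show ?thesis using tt_B[OF w] by simp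
qed

lemma filt_one_set: assumes "b0 \<in> car B" shows "filt {one}"
  unfolding impl_filter_def
proof (intro conjI)
  show "{one} \<subseteq> car B" using one_in[OF assms] by blast
  show "\<forall>a\<in>car B. im B a a \<in> {one}" using one_eq by simp
  show "\<forall>a b. a \<in> {one} \<longrightarrow> im B a b \<in> {one} \<longrightarrow> b \<in> car B \<longrightarrow> b \<in> {one}"
  proof (intro allI impI)
    fix a b assume a: "a \<in> {one}" and ab: "im B a b \<in> {one}" and b: "b \<in> car B"
    have "im B (im B b0 b0) b = b" using B5[OF assms b] .
    then have "im B one b = b" using one_eq[OF assms] by simp
    then show "b \<in> {one}" using a ab by simp
  qed
qed

lemma dir1:
  fixes phis :: "nat fm list"
  assumes sq: "\<forall>\<phi>\<in>set phis. sahl_comb \<phi> \<and> syms \<phi> \<subseteq> L"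
    and valid: "\<forall>k\<ge>1. valid_in H S (fk k phis)"
  shows "Up_sat XX (\<subseteq>) phis"
  unfolding Up_sat_iff
proof (intro allI impI ballI)
  fix v :: "nat \<Rightarrow> 'b set set" and F assume v: "upv XX v" and F: "F \<in> XX"
  show "\<exists>\<phi>\<in>set phis. F \<in> eval (Up XX (\<subseteq>)) v \<phi>"
  proof (rule ccontr)
    assume "\<not> (\<exists>\<phi>\<in>set phis. F \<in> eval (Up XX (\<subseteq>)) v \<phi>)"
    then have nF: "\<forall>\<phi>\<in>set phis. F \<notin> eval (Up XX (\<subseteq>)) v \<phi>" by blast
    obtain E where E: "\<forall>m. finite (E m) \<and> E m \<subseteq> car B" "finite {m. E m \<noteq> {}}"
      "\<forall>\<phi>\<in>set phis. F \<notin> eval (Up XX (\<subseteq>)) (\<lambda>m. UU (E m)) \<phi>"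
      using core1[OF sq v F nF] by blast
    obtain b0 where b0: "b0 \<in> car B" using X_proper[OF F] by blast
    have oneF: "one \<in> F" using filt_one[OF X_filt[OF F] b0] .
    have onec: "one \<in> car B" using one_in[OF b0] .
    define lst where "lst m = (SOME xs. set xs = E m \<and> distinct xs)" for m
    have lst: "set (lst m) = E m \<and> distinct (lst m)" for m
    proof -
      have "\<exists>xs. set xs = E m \<and> distinct xs" using finite_distinct_list E(1) by blast
      then show ?thesis unfolding lst_def by (rule someI_ex)
    qed
    define supp where "supp = {m. E m \<noteq> {}}"
    define k where "k = Suc (\<Sum>m\<in>supp. card (E m))"
    have k1: "k \<ge> 1" unfolding k_def by simp
    have lenk: "length (lst m) \<le> k" for m
    proof -
      have "length (lst m) = card (E m)" using distinct_card[of "lst m"] lst[of m] by simp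
      moreover have "card (E m) \<le> (\<Sum>m\<in>supp. card (E m))"
      proof (cases "m \<in> supp")
        case True
        then show ?thesis using member_le_sum[of m supp "\<lambda>m. card (E m)"] E(2) unfolding supp_def by simp
      next
        case False
        then show ?thesis unfolding supp_def by simp
      qed
      ultimately show ?thesis unfolding k_def by simp
    qed
    define a0 where "a0 x = (case x of None \<Rightarrow> one | Some (m, j) \<Rightarrow>
        (if 1 \<le> j \<and> j \<le> length (lst m) then lst m ! (j - 1) else one))" for x
    have a0c: "\<forall>x. a0 x \<in> car B"
    proof
      fix x show "a0 x \<in> car B"
      proof (cases x)
        case None
        then show ?thesis unfolding a0_def using onec by simp
      next
        case (Some p)
        obtain m j where p: "p = (m, j)" by (cases p)
        have "set (lst m) \<subseteq> car B" using lst[of m] E(1) by blast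
        then show ?thesis unfolding a0_def Some p using onec by auto
      qed
    qed
    define u0 where "u0 x = e (a0 x)" for x
    have u0: "upv XX u0" unfolding upv_def u0_def using e_up by blast
    have wk_eq: "wk XX k u0 = (\<lambda>m. UU (E m))"
    proof (rule ext, rule set_eqI)
      fix m x
      show "x \<in> wk XX k u0 m \<longleftrightarrow> x \<in> UU (E m)"
      proof
        assume x: "x \<in> wk XX k u0 m"
        then have xX: "x \<in> XX" and xa: "\<forall>j\<in>{1..k}. a0 (Some (m, j)) \<in> x"
          unfolding wk_def u0_def e_def by auto
        have "E m \<subseteq> x"
        proof
          fix c assume c: "c \<in> E m"
          then obtain i where i: "i < length (lst m)" "lst m ! i = c"
            using lst[of m] in_set_conv_nth[of c "lst m"] by auto
          have "Suc i \<in> {1..k}" using i(1) lenk[of m] by simp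
          then have "a0 (Some (m, Suc i)) \<in> x" using xa by blast
          then show "c \<in> x" unfolding a0_def using i by simp
        qed
        then show "x \<in> UU (E m)" unfolding UU_def using xX by blast
      next
        assume x: "x \<in> UU (E m)"
        then have xX: "x \<in> XX" and Ex: "E m \<subseteq> x" unfolding UU_def by auto
        have "\<forall>j\<in>{1..k}. a0 (Some (m, j)) \<in> x"
        proof
          fix j assume j: "j \<in> {1..k}"
          show "a0 (Some (m, j)) \<in> x"
          proof (cases "1 \<le> j \<and> j \<le> length (lst m)")
            case True
            then have "j - 1 < length (lst m)" by linarith
            then have "lst m ! (j - 1) \<in> E m" using nth_mem[of "j - 1" "lst m"] lst[of m] by simp
            then show ?thesis unfolding a0_def using True Ex by auto
          next
            case False
            then have "a0 (Some (m, j)) = one" unfolding a0_def by auto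
            then show ?thesis using filt_one[OF X_filt[OF xX] b0] by simp
          qed
        qed
        then show "x \<in> wk XX k u0 m" unfolding wk_def u0_def e_def using xX by auto
      qed
    qed
    have "\<forall>\<phi>\<in>set phis. \<exists>\<psi>\<in>set (bold k \<phi>). F \<notin> eval (Up XX (\<subseteq>)) u0 \<psi>"
    proof
      fix \<phi> assume \<phi>: "\<phi> \<in> set phis"
      have "F \<notin> capL XX (map (eval (Up XX (\<subseteq>)) u0) (bold k \<phi>))"
        using E(3) \<phi> bold_sem[OF k1 u0, of \<phi>] wk_eq by simp
      then show "\<exists>\<psi>\<in>set (bold k \<phi>). F \<notin> eval (Up XX (\<subseteq>)) u0 \<psi>" using F unfolding capL_def by auto
    qed
    then obtain psi where psi: "\<forall>\<phi>\<in>set phis. psi \<phi> \<in> set (bold k \<phi>) \<and> F \<notin> eval (Up XX (\<subseteq>)) u0 (psi \<phi>)"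
      by metis
    define z where "z = (Zero \<in> L)"
    define a0' where "a0' n = a0 (from_nat n)" for n
    have a0'c: "\<forall>n. a0' n \<in> car B" unfolding a0'_def using a0c by blast
    define c where "c \<phi> = eval B a0' (trT z (psi \<phi>))" for \<phi>
    have cprop: "c \<phi> \<in> car B \<and> e (c \<phi>) = eval (Up XX (\<subseteq>)) u0 (psi \<phi>)" if \<phi>: "\<phi> \<in> set phis" for \<phi>
    proof -
      have g: "goodL L (psi \<phi>)" using bold_good[OF k1, of \<phi> L] sq \<phi> psi by blast
      have s: "syms (trT z (psi \<phi>)) \<subseteq> L" unfolding z_def using trT_syms[OF imp g] .
      have "c \<phi> \<in> car B \<and> e (c \<phi>) = eval (Up XX (\<subseteq>)) (\<lambda>n. e (a0' n)) (trT z (psi \<phi>))"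
        unfolding c_def using ehom[OF s a0'c] .
      moreover have "eval (Up XX (\<subseteq>)) (\<lambda>n. e (a0' n)) (trT z (psi \<phi>)) = eval (Up XX (\<subseteq>)) u0 (psi \<phi>)"
        unfolding trT_Up a0'_def u0_def by simp
      ultimately show ?thesis by simp
    qed
    define C where "C = c ` set phis"
    have Cfin: "finite C" unfolding C_def by simp
    have Cc: "C \<subseteq> car B" unfolding C_def using cprop by blast
    have CF: "C \<inter> F = {}"
    proof -
      have "\<forall>\<phi>\<in>set phis. c \<phi> \<notin> F" using cprop psi F unfolding e_def by blast
      then show ?thesis unfolding C_def by blast
    qed
    obtain y where y: "y \<in> car B" "y \<notin> F" "\<forall>c'\<in>C. im B c' y \<in> F" using irrList[OF F Cfin Cc CF] by blast
    define a1 where "a1 = a0(None := y)"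
    define u1 where "u1 x = e (a1 x)" for x
    have u1: "upv XX u1" unfolding upv_def u1_def using e_up by blast
    define w where "w n = a1 (from_nat n)" for n
    have wc: "\<forall>n. w n \<in> car B" unfolding w_def a1_def using a0c y(1) by auto
    have sf: "syms (trT (Zero \<in> L) (fk k phis)) \<subseteq> L" using trT_syms[OF imp fk_good[OF k1]] sq by blast
    have "eval B w (trT (Zero \<in> L) (fk k phis)) = one"
      using transfer[OF k1 _ _ wc] sq valid k1 by blast
    then have "F \<in> e (eval B w (trT (Zero \<in> L) (fk k phis)))" unfolding e_def using F oneF by simp
    also have "e (eval B w (trT (Zero \<in> L) (fk k phis))) = eval (Up XX (\<subseteq>)) (\<lambda>n. e (w n)) (trT (Zero \<in> L) (fk k phis))"
      using ehom[OF sf wc] by blast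
    also have "\<dots> = eval (Up XX (\<subseteq>)) u1 (fk k phis)"
      unfolding trT_Up w_def u1_def by simp
    finally have Ff: "F \<in> eval (Up XX (\<subseteq>)) u1 (fk k phis)" .
    have "F \<in> capL XX (map (eval (Up XX (\<subseteq>)) u1) (map (\<lambda>\<phi>. imps (bold k \<phi>) (Var None)) phis))"
      unfolding capL_def
    proof (intro CollectI conjI ballI)
      show "F \<in> XX" by fact
    next
      fix V assume "V \<in> set (map (eval (Up XX (\<subseteq>)) u1) (map (\<lambda>\<phi>. imps (bold k \<phi>) (Var None)) phis))"
      then obtain \<phi> where \<phi>: "\<phi> \<in> set phis" "V = eval (Up XX (\<subseteq>)) u1 (imps (bold k \<phi>) (Var None))" by auto
      have "\<forall>Q\<in>XX. F \<subseteq> Q \<longrightarrow> Q \<in> capL XX (map (eval (Up XX (\<subseteq>)) u1) (bold k \<phi>)) \<longrightarrow> Q \<in> eval (Up XX (\<subseteq>)) u1 (Var None)"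
      proof (intro ballI impI)
        fix Q assume Q: "Q \<in> XX" "F \<subseteq> Q" "Q \<in> capL XX (map (eval (Up XX (\<subseteq>)) u1) (bold k \<phi>))"
        have pin: "psi \<phi> \<in> set (bold k \<phi>)" using psi \<phi>(1) by blast
        have "Q \<in> eval (Up XX (\<subseteq>)) u1 (psi \<phi>)" using Q(3) pin unfolding capL_def by auto
        moreover have "eval (Up XX (\<subseteq>)) u1 (psi \<phi>) = eval (Up XX (\<subseteq>)) u0 (psi \<phi>)"
          by (rule eval_someV) (use bold_someV pin in \<open>auto simp: u1_def u0_def a1_def\<close>)
        ultimately have "c \<phi> \<in> Q" using cprop[OF \<phi>(1)] unfolding e_def by blast
        moreover have "im B (c \<phi>) y \<in> Q" using y(3) Q(2) \<phi>(1) unfolding C_def by blast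
        ultimately have "y \<in> Q" using filt_mp[OF X_filt[OF Q(1)] _ _ y(1)] by blast
        then show "Q \<in> eval (Up XX (\<subseteq>)) u1 (Var None)" unfolding u1_def a1_def e_def using Q(1) by simp
      qed
      then show "F \<in> V" unfolding \<phi>(2) imps_sem[OF u1] using F by blast
    qed
    then have "F \<in> eval (Up XX (\<subseteq>)) u1 (Var None)"
      using Ff unfolding fk_def imps_sem[OF u1] using F by blast
    then show False using y(2) unfolding u1_def a1_def e_def by simp
  qed
qed

end

lemma eval_upd: "eval (H\<lparr>car := S\<rparr>) v \<phi> = eval H v \<phi>"
  by (induction \<phi>) auto

lemma A_var: assumes "subreduct L H S" shows "H\<lparr>car := S\<rparr> \<in> variety L H S"
proof -
  have "closed_under L H S" using assms unfolding subreduct_def by blast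
  then have "closed_under L (H\<lparr>car := S\<rparr>) (car (H\<lparr>car := S\<rparr>))" unfolding closed_under_def by simp
  then show ?thesis unfolding variety_def by (simp add: eval_upd)
qed

lemma dir2:
  fixes phis :: "nat fm list" and H :: "'a alg"
  assumes imp: "Imp \<in> L" and sub: "subreduct L H S" and sq: "\<forall>\<phi>\<in>set phis. sahl_comb \<phi> \<and> syms \<phi> \<subseteq> L"
    and sat: "Up_sat (Bstar (H\<lparr>car := S\<rparr>)) (\<subseteq>) phis" and k: "k \<ge> 1"
  shows "valid_in H S (fk k phis)"
  unfolding valid_in_def
proof (intro allI impI)
  fix v :: "(nat \<times> nat) option \<Rightarrow> 'a" assume v: "\<forall>x. v x \<in> S"
  define A where "A = H\<lparr>car := S\<rparr>"
  interpret s: sett L H S A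
    by unfold_locales (use imp sub A_var[OF sub] in \<open>auto simp: A_def\<close>)
  have hH: "heyting H" using sub unfolding subreduct_def by blast
  have SH: "S \<subseteq> car H" using sub unfolding subreduct_def by blast
  have clS: "closed_under L H S" using sub unfolding subreduct_def by blast
  define v' where "v' n = v (from_nat n)" for n
  have v'S: "\<forall>n. v' n \<in> S" unfolding v'_def using v by blast
  have v'H: "\<forall>n. v' n \<in> car H" using v'S SH by blast
  have v'A: "\<forall>n. v' n \<in> car A" unfolding A_def using v'S by simp
  define f' where "f' = trT (Zero \<in> L) (fk k phis)"
  have sf: "syms f' \<subseteq> L" unfolding f'_def using trT_syms[OF imp fk_good[OF k]] sq by blast
  have e1: "eval H v (fk k phis) = eval H v' f'"
    unfolding f'_def using trT_H[OF hH v'H] unfolding v'_def by simp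
  define c where "c = eval A v' f'"
  have cH: "c = eval H v' f'" unfolding c_def A_def by (simp add: eval_upd)
  have cA: "c \<in> car A \<and> s.e c = eval (Up s.XX (\<subseteq>)) (\<lambda>n. s.e (v' n)) f'"
    unfolding c_def using s.ehom[OF sf v'A] .
  have "eval (Up s.XX (\<subseteq>)) (\<lambda>n. s.e (v' n)) f' = eval (Up s.XX (\<subseteq>)) (\<lambda>x. s.e (v x)) (fk k phis)"
    unfolding f'_def trT_Up v'_def by simp
  also have "\<dots> = s.XX"
  proof (rule fk_valid_Up[OF k])
    show "\<forall>v :: nat \<Rightarrow> 'a set set. upv s.XX v \<longrightarrow> (\<forall>F\<in>s.XX. \<exists>\<phi>\<in>set phis. F \<in> eval (Up s.XX (\<subseteq>)) v \<phi>)"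
      using sat Up_sat_iff unfolding A_def by blast
    show "upv s.XX (\<lambda>x. s.e (v x))" unfolding upv_def using s.e_up by blast
  qed
  finally have ecX: "s.e c = s.XX" using cA by simp
  have vN: "v None \<in> car A" unfolding A_def using v by simp
  have "c = s.one"
  proof (rule ccontr)
    assume "c \<noteq> s.one"
    then have "c \<notin> {s.one}" by simp
    then obtain P where P: "P \<in> s.XX" "c \<notin> P" using s.Z1[OF s.filt_one_set[OF vN]] cA by blast
    then show False using ecX unfolding s.e_def by blast
  qed
  also have "s.one = im A (v None) (v None)" using s.one_eq[OF vN] by simp
  also have "\<dots> = tp H" unfolding A_def using H1[OF hH] v SH by auto
  finally show "eval H v (fk k phis) = tp H" using e1 cH by simp
qed

theorem lemma9p4:
  fixes L :: "opsym set" and phis :: "nat fm list" and H :: "'a alg" and S :: "'a set"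
  assumes "Imp \<in> L"
    and "sahlqvist_quasi L phis"
    and "subreduct L H S"
  shows "((\<forall>\<phi>\<in>A_Phi phis. valid_in H S \<phi>) \<longrightarrow>
            (\<forall>B :: 'b alg. B \<in> variety L H S \<longrightarrow> Up_sat (Bstar B) (\<subseteq>) phis))
       \<and> ((\<forall>B :: 'a alg. B \<in> variety L H S \<longrightarrow> Up_sat (Bstar B) (\<subseteq>) phis) \<longrightarrow>
            (\<forall>\<phi>\<in>A_Phi phis. valid_in H S \<phi>))"
proof (intro conjI impI allI ballI)
  have sq: "\<forall>\<phi>\<in>set phis. sahl_comb \<phi> \<and> syms \<phi> \<subseteq> L" using assms(2) unfolding sahlqvist_quasi_def by blast
  {
    fix B :: "'b alg"
    assume val: "\<forall>\<phi>\<in>A_Phi phis. valid_in H S \<phi>" and B: "B \<in> variety L H S"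
    interpret s: sett L H S B by unfold_locales (use assms B in auto)
    have "\<forall>k\<ge>1. valid_in H S (fk k phis)" using val unfolding A_Phi_fk by blast
    then show "Up_sat (Bstar B) (\<subseteq>) phis" using s.dir1[OF sq] by blast
  }
  {
    fix \<phi> assume all: "\<forall>B :: 'a alg. B \<in> variety L H S \<longrightarrow> Up_sat (Bstar B) (\<subseteq>) phis"
      and \<phi>: "\<phi> \<in> A_Phi phis"
    obtain k where k: "k \<ge> 1" "\<phi> = fk k phis" using \<phi> unfolding A_Phi_fk by blast
    have "Up_sat (Bstar (H\<lparr>car := S\<rparr>)) (\<subseteq>) phis" using all A_var[OF assms(3)] by blast
    then show "valid_in H S \<phi>" using dir2[OF assms(1,3) sq _ k(1)] k(2) by blast
  }
qed


end
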